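(* Let $\mathcal{M}$ be a minimally $k$-level matroid and $F$ a $k$-level flacet of $\mathcal{M}$. Then $\operatorname{rk}(F)=k-1$.
   Context: Levelness of a matroid $\mathcal{M}=(E,\mathcal{B})$: the least $k$ such that every facet-defining affine function takes at most $k$ distinct values on $V_{\mathcal{M}}=\{\mathbf{1}_B:B\in\mathcal{B}\}$ (facets are inclusion-maximal faces $\{v\in V_{\mathcal{M}}:\ell(v)=0\}\neq V_{\mathcal{M}}$ for affine $\ell\ge0$ on $V_{\mathcal{M}}$). $\mathcal{M}$ is minimally $k$-level if its levelness is $k$ and every proper minor has strictly smaller levelness. A flacet is a flat $\emptyset\neq S\subsetneq E$ such that the restriction $\mathcal{M}|_S$ and contraction $\mathcal{M}/S$ are connected; a flacet $F$ is $k$-level if $\ell_F(x)=\sum_{e\in F}x_e$ takes exactly $k$ distinct values on $V_{\mathcal{M}}$. *)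

theory Defs
  imports Main "HOL-Library.Indicator_Function"
begin

type_synonym 'a matroid = "'a set \<times> 'a set set"

definition ground :: "'a matroid \<Rightarrow> 'a set" where "ground M = fst M"
definition bases :: "'a matroid \<Rightarrow> 'a set set" where "bases M = snd M"

definition matroid :: "'a matroid \<Rightarrow> bool" where
  "matroid M \<longleftrightarrow> finite (ground M) \<and> bases M \<noteq> {} \<and>
     (\<forall>B\<in>bases M. B \<subseteq> ground M) \<and>
     (\<forall>B1\<in>bases M. \<forall>B2\<in>bases M. \<forall>x\<in>B1 - B2.
        \<exists>y\<in>B2 - B1. insert y (B1 - {x}) \<in> bases M)"

definition indep :: "'a matroid \<Rightarrow> 'a set \<Rightarrow> bool" where
  "indep M I \<longleftrightarrow> (\<exists>B\<in>bases M. I \<subseteq> B)"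

definition rk :: "'a matroid \<Rightarrow> 'a set \<Rightarrow> nat" where
  "rk M S = Max ((\<lambda>B. card (B \<inter> S)) ` bases M)"

definition restrict :: "'a matroid \<Rightarrow> 'a set \<Rightarrow> 'a matroid" where
  "restrict M S = (S, {I. I \<subseteq> S \<and> indep M I \<and>
                          (\<forall>J. I \<subset> J \<and> J \<subseteq> S \<longrightarrow> \<not> indep M J)})"

definition contract :: "'a matroid \<Rightarrow> 'a set \<Rightarrow> 'a matroid" where
  "contract M S = (ground M - S, {B - S | B. B \<in> bases M \<and> card (B \<inter> S) = rk M S})"

definition proper_minor :: "'a matroid \<Rightarrow> 'a matroid \<Rightarrow> bool" where
  "proper_minor N M \<longleftrightarrow> (\<exists>S C. C \<subseteq> S \<and> S \<subseteq> ground M \<and> (C \<noteq> {} \<or> S \<noteq> ground M)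
                          \<and> N = contract (restrict M S) C)"

definition connected :: "'a matroid \<Rightarrow> bool" where
  "connected M \<longleftrightarrow> \<not> (\<exists>S. S \<noteq> {} \<and> S \<subset> ground M \<and>
      bases M = {B1 \<union> B2 | B1 B2. B1 \<in> bases (restrict M S)
                                 \<and> B2 \<in> bases (restrict M (ground M - S))})"

definition flat :: "'a matroid \<Rightarrow> 'a set \<Rightarrow> bool" where
  "flat M S \<longleftrightarrow> S \<subseteq> ground M \<and> (\<forall>e \<in> ground M - S. rk M (insert e S) > rk M S)"

definition flacet :: "'a matroid \<Rightarrow> 'a set \<Rightarrow> bool" where
  "flacet M S \<longleftrightarrow> flat M S \<and> S \<noteq> {} \<and> S \<subset> ground M \<and>
     connected (restrict M S) \<and> connected (contract M S)"

text \<open>Vertex set V_M of the base polytope: indicator vectors of bases.\<close>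
definition verts :: "'a matroid \<Rightarrow> ('a \<Rightarrow> real) set" where
  "verts M = (\<lambda>B. indicator B) ` bases M"

definition aff :: "'a matroid \<Rightarrow> ('a \<Rightarrow> real) \<Rightarrow> real \<Rightarrow> ('a \<Rightarrow> real) \<Rightarrow> real" where
  "aff M a c x = (\<Sum>e\<in>ground M. a e * x e) + c"

definition face_of_aff :: "'a matroid \<Rightarrow> ('a \<Rightarrow> real) \<Rightarrow> real \<Rightarrow> ('a \<Rightarrow> real) set" where
  "face_of_aff M a c = {v \<in> verts M. aff M a c v = 0}"

definition is_face :: "'a matroid \<Rightarrow> ('a \<Rightarrow> real) set \<Rightarrow> bool" where
  "is_face M F \<longleftrightarrow> (\<exists>a c. (\<forall>v\<in>verts M. aff M a c v \<ge> 0) \<and> F = face_of_aff M a c)"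

definition is_facet :: "'a matroid \<Rightarrow> ('a \<Rightarrow> real) set \<Rightarrow> bool" where
  "is_facet M F \<longleftrightarrow> is_face M F \<and> F \<noteq> verts M \<and>
     (\<forall>G. is_face M G \<and> G \<noteq> verts M \<and> F \<subseteq> G \<longrightarrow> G = F)"

definition facet_defining :: "'a matroid \<Rightarrow> ('a \<Rightarrow> real) \<Rightarrow> real \<Rightarrow> bool" where
  "facet_defining M a c \<longleftrightarrow> (\<forall>v\<in>verts M. aff M a c v \<ge> 0) \<and> is_facet M (face_of_aff M a c)"

definition levelness :: "'a matroid \<Rightarrow> nat" where
  "levelness M = (LEAST k. \<forall>a c. facet_defining M a c \<longrightarrow> card (aff M a c ` verts M) \<le> k)"

definition minimally_level :: "'a matroid \<Rightarrow> nat \<Rightarrow> bool" where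
  "minimally_level M k \<longleftrightarrow> levelness M = k \<and>
     (\<forall>N. matroid N \<and> proper_minor N M \<longrightarrow> levelness N < k)"

definition level_flacet :: "'a matroid \<Rightarrow> 'a set \<Rightarrow> nat \<Rightarrow> bool" where
  "level_flacet M F k \<longleftrightarrow> flacet M F \<and> card ((\<lambda>x. \<Sum>e\<in>F. x e) ` verts M) = k"

end

theory Submission
  imports Defs
begin



definition mis :: "'a matroid \<Rightarrow> 'a set \<Rightarrow> 'a set \<Rightarrow> bool" where
  "mis M S I \<longleftrightarrow> I \<subseteq> S \<and> indep M I \<and> (\<forall>J. I \<subset> J \<and> J \<subseteq> S \<longrightarrow> \<not> indep M J)"

lemma bases_restrict: "bases (restrict M S) = {I. mis M S I}"
  by (simp add: bases_def restrict_def mis_def)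
lemma ground_restrict[simp]: "ground (restrict M S) = S"
  by (simp add: ground_def restrict_def)
lemma ground_contract[simp]: "ground (contract M S) = ground M - S"
  by (simp add: ground_def contract_def)
lemma bases_contract: "bases (contract M C) = {B - C | B. B \<in> bases M \<and> card (B \<inter> C) = rk M C}"
  by (simp add: bases_def contract_def)

context fixes M :: "'a matroid" assumes mat: "matroid M"
begin

lemma fin_E: "finite (ground M)" using mat by (simp add: matroid_def)
lemma bases_ne: "bases M \<noteq> {}" using mat by (simp add: matroid_def)
lemma basis_sub: "B \<in> bases M \<Longrightarrow> B \<subseteq> ground M" using mat by (simp add: matroid_def)
lemma basis_fin: "B \<in> bases M \<Longrightarrow> finite B" using basis_sub fin_E finite_subset by blast
lemma exch: "B1 \<in> bases M \<Longrightarrow> B2 \<in> bases M \<Longrightarrow> x \<in> B1 - B2 \<Longrightarrow> \<exists>y\<in>B2 - B1. insert y (B1 - {x}) \<in> bases M"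
  using mat by (simp add: matroid_def)
lemma fin_bases: "finite (bases M)"
proof -
  have "bases M \<subseteq> Pow (ground M)" using basis_sub by auto
  thus ?thesis using fin_E finite_subset by blast
qed

lemma basis_card_aux: "\<forall>B1 B2. B1 \<in> bases M \<longrightarrow> B2 \<in> bases M \<longrightarrow> card (B1 - B2) = n \<longrightarrow> card B1 = card B2"
proof (induction n)
  case 0
  show ?case
  proof (intro allI impI)
    fix B1 B2 assume b: "B1 \<in> bases M" "B2 \<in> bases M" "card (B1 - B2) = 0"
    hence s: "B1 \<subseteq> B2" using basis_fin by auto
    have "B2 - B1 = {}"
    proof (rule ccontr)
      assume "B2 - B1 \<noteq> {}" then obtain x where "x \<in> B2 - B1" by auto
      then obtain y where "y \<in> B1 - B2" using exch[OF b(2) b(1)] by blast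
      thus False using s by auto
    qed
    thus "card B1 = card B2" using s by (metis Diff_eq_empty_iff subset_antisym)
  qed
next
  case (Suc n)
  show ?case
  proof (intro allI impI)
    fix B1 B2 assume b: "B1 \<in> bases M" "B2 \<in> bases M" "card (B1 - B2) = Suc n"
    then obtain x where x: "x \<in> B1 - B2" by (metis card.empty ex_in_conv nat.distinct(1))
    then obtain y where y: "y \<in> B2 - B1" "insert y (B1 - {x}) \<in> bases M" using exch[OF b(1) b(2)] by blast
    have "insert y (B1 - {x}) - B2 = (B1 - B2) - {x}" using x y by auto
    hence "card (insert y (B1 - {x}) - B2) = n" using b(3) x basis_fin[OF b(1)] by simp
    hence "card (insert y (B1 - {x})) = card B2" using Suc.IH y(2) b(2) by blast
    moreover have "card (insert y (B1 - {x})) = card B1"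
    proof -
      have "card B1 > 0" using x basis_fin[OF b(1)] card_gt_0_iff by blast
      thus ?thesis using x y basis_fin[OF b(1)] by (simp add: card_insert_if)
    qed
    ultimately show "card B1 = card B2" by simp
  qed
qed

lemma basis_card: "B1 \<in> bases M \<Longrightarrow> B2 \<in> bases M \<Longrightarrow> card B1 = card B2"
  using basis_card_aux by blast

lemma indep_sub: "indep M I \<Longrightarrow> I \<subseteq> ground M" using basis_sub by (auto simp: indep_def)
lemma indep_fin: "indep M I \<Longrightarrow> finite I" using indep_sub fin_E finite_subset by blast
lemma indep_mono: "indep M I \<Longrightarrow> J \<subseteq> I \<Longrightarrow> indep M J" by (auto simp: indep_def)
lemma basis_indep: "B \<in> bases M \<Longrightarrow> indep M B" by (auto simp: indep_def)
lemma indep_empty: "indep M {}" using bases_ne by (auto simp: indep_def)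

lemma indep_card_le: "indep M I \<Longrightarrow> B \<in> bases M \<Longrightarrow> card I \<le> card B"
proof -
  assume a: "indep M I" "B \<in> bases M"
  then obtain B' where b: "B' \<in> bases M" "I \<subseteq> B'" unfolding indep_def by blast
  have "card I \<le> card B'" using b basis_fin card_mono by blast
  also have "card B' = card B" using b(1) a(2) by (rule basis_card)
  finally show ?thesis .
qed

lemma indep_card_basis: "indep M I \<Longrightarrow> B \<in> bases M \<Longrightarrow> card I = card B \<Longrightarrow> I \<in> bases M"
proof -
  assume a: "indep M I" "B \<in> bases M" "card I = card B"
  then obtain B' where b: "B' \<in> bases M" "I \<subseteq> B'" unfolding indep_def by blast
  have "card B' = card B" using b(1) a(2) by (rule basis_card)
  hence "I = B'" using b basis_fin a(3) card_subset_eq by metis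
  thus ?thesis using b by simp
qed

lemma aug_basis_aux: "\<forall>B'. B' \<in> bases M \<longrightarrow> I \<subseteq> B' \<longrightarrow> card (B' - (I \<union> B)) = n \<longrightarrow>
   (\<exists>B''\<in>bases M. I \<subseteq> B'' \<and> B'' \<subseteq> I \<union> B)" if bB: "B \<in> bases M"
proof (induction n)
  case 0
  show ?case
  proof (intro allI impI)
    fix B' assume b: "B' \<in> bases M" "I \<subseteq> B'" "card (B' - (I \<union> B)) = 0"
    hence "B' - (I \<union> B) = {}" using basis_fin[OF b(1)] by simp
    hence "B' \<subseteq> I \<union> B" by blast
    thus "\<exists>B''\<in>bases M. I \<subseteq> B'' \<and> B'' \<subseteq> I \<union> B" using b by blast
  qed
next
  case (Suc n)
  show ?case
  proof (intro allI impI)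
    fix B' assume b: "B' \<in> bases M" "I \<subseteq> B'" "card (B' - (I \<union> B)) = Suc n"
    then obtain x where x: "x \<in> B' - (I \<union> B)" by (metis card.empty ex_in_conv nat.distinct(1))
    then obtain y where y: "y \<in> B - B'" "insert y (B' - {x}) \<in> bases M" using exch[OF b(1) bB] by blast
    have "insert y (B' - {x}) - (I \<union> B) = (B' - (I \<union> B)) - {x}" using x y by auto
    hence "card (insert y (B' - {x}) - (I \<union> B)) = n" using b(3) x basis_fin[OF b(1)] by simp
    moreover have "I \<subseteq> insert y (B' - {x})" using b(2) x by auto
    ultimately show "\<exists>B''\<in>bases M. I \<subseteq> B'' \<and> B'' \<subseteq> I \<union> B" using Suc.IH y(2) by blast
  qed
qed

lemma aug_basis: "indep M I \<Longrightarrow> B \<in> bases M \<Longrightarrow> \<exists>B''\<in>bases M. I \<subseteq> B'' \<and> B'' \<subseteq> I \<union> B"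
proof -
  assume "indep M I" "B \<in> bases M"
  then obtain B' where "B' \<in> bases M" "I \<subseteq> B'" unfolding indep_def by blast
  thus ?thesis using aug_basis_aux[OF \<open>B \<in> bases M\<close>, of I "card (B' - (I \<union> B))"] by blast
qed

lemma aug_indep: assumes "indep M I" "indep M J" "card I < card J"
  shows "\<exists>y\<in>J - I. indep M (insert y I)"
proof -
  obtain BJ where bj: "BJ \<in> bases M" "J \<subseteq> BJ" using assms(2) by (auto simp: indep_def)
  obtain B'' where b: "B'' \<in> bases M" "I \<subseteq> B''" "B'' \<subseteq> I \<union> BJ" using aug_basis[OF assms(1) bj(1)] by blast
  show ?thesis
  proof (rule ccontr)
    assume n: "\<not> ?thesis"
    have "B'' \<inter> (J - I) = {}"
    proof (rule ccontr)
      assume "B'' \<inter> (J - I) \<noteq> {}" then obtain y where "y \<in> B''" "y \<in> J - I" by auto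
      hence "insert y I \<subseteq> B''" using b by blast
      hence "indep M (insert y I)" using b(1) unfolding indep_def by blast
      thus False using n \<open>y \<in> J - I\<close> by blast
    qed
    hence "B'' \<subseteq> I \<union> (BJ - J)" using b by auto
    hence c1: "card B'' \<le> card (I \<union> (BJ - J))"
      using basis_fin[OF bj(1)] indep_fin[OF assms(1)] by (intro card_mono) auto
    have c2: "card (I \<union> (BJ - J)) \<le> card I + card (BJ - J)" by (rule card_Un_le)
    have fJ: "finite J" using bj basis_fin finite_subset by blast
    have c3: "card (BJ - J) = card BJ - card J" using bj fJ by (simp add: card_Diff_subset)
    have c4: "card J \<le> card BJ" using bj basis_fin[OF bj(1)] by (simp add: card_mono)
    have "card B'' < card BJ" using c1 c2 c3 c4 assms(3) by linarith
    moreover have "card B'' = card BJ" using b(1) bj(1) by (rule basis_card)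
    ultimately show False by simp
  qed
qed

lemma rk_ge_basis: "B \<in> bases M \<Longrightarrow> card (B \<inter> A) \<le> rk M A"
  unfolding rk_def using fin_bases by (intro Max_ge) auto

lemma rk_witness: "\<exists>B\<in>bases M. card (B \<inter> A) = rk M A"
proof -
  have "rk M A \<in> (\<lambda>B. card (B \<inter> A)) ` bases M"
    unfolding rk_def using fin_bases bases_ne by (intro Max_in) auto
  thus ?thesis by auto
qed

lemma rk_ge: "indep M I \<Longrightarrow> I \<subseteq> A \<Longrightarrow> card I \<le> rk M A"
proof -
  assume a: "indep M I" "I \<subseteq> A"
  then obtain B where b: "B \<in> bases M" "I \<subseteq> B" unfolding indep_def by blast
  have "card I \<le> card (B \<inter> A)" using a b basis_fin[OF b(1)] by (intro card_mono) auto
  also have "\<dots> \<le> rk M A" using b(1) by (rule rk_ge_basis)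
  finally show ?thesis .
qed

lemma rk_indep_witness: "\<exists>I. indep M I \<and> I \<subseteq> A \<and> card I = rk M A"
proof -
  obtain B where "B \<in> bases M" "card (B \<inter> A) = rk M A" using rk_witness by blast
  thus ?thesis using indep_mono[OF basis_indep] by blast
qed

lemma mis_iff: "mis M A I \<longleftrightarrow> indep M I \<and> I \<subseteq> A \<and> card I = rk M A"
proof
  assume m: "mis M A I"
  hence i: "indep M I" "I \<subseteq> A" by (auto simp: mis_def)
  have le: "card I \<le> rk M A" using i by (rule rk_ge)
  obtain K where k: "indep M K" "K \<subseteq> A" "card K = rk M A" using rk_indep_witness by blast
  have "\<not> card I < card K"
  proof
    assume "card I < card K"
    then obtain y where y: "y \<in> K - I" "indep M (insert y I)" using aug_indep i(1) k(1) by blast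
    have "I \<subset> insert y I" "insert y I \<subseteq> A" using y k(2) i(2) by auto
    thus False using m y(2) unfolding mis_def by blast
  qed
  thus "indep M I \<and> I \<subseteq> A \<and> card I = rk M A" using i le k(3) by linarith
next
  assume a: "indep M I \<and> I \<subseteq> A \<and> card I = rk M A"
  show "mis M A I" unfolding mis_def
  proof (intro conjI allI impI)
    fix J assume j: "I \<subset> J \<and> J \<subseteq> A"
    show "\<not> indep M J"
    proof
      assume "indep M J"
      hence "card J \<le> rk M A" "finite J" using j rk_ge indep_fin by auto
      moreover have "card I < card J" using j \<open>finite J\<close> psubset_card_mono by blast
      ultimately show False using a by linarith
    qed
  qed (use a in auto)
qed

lemma mis_card: "mis M A I \<Longrightarrow> card I = rk M A" using mis_iff by blast
lemma mis_indep: "mis M A I \<Longrightarrow> indep M I" by (simp add: mis_def)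
lemma mis_sub: "mis M A I \<Longrightarrow> I \<subseteq> A" by (simp add: mis_def)

lemma extend_aux: "\<forall>I. indep M I \<longrightarrow> I \<subseteq> A \<longrightarrow> rk M A - card I = n \<longrightarrow> (\<exists>K. mis M A K \<and> I \<subseteq> K)"
proof (induction n)
  case 0
  show ?case
  proof (intro allI impI)
    fix I assume a: "indep M I" "I \<subseteq> A" "rk M A - card I = 0"
    have "card I \<le> rk M A" using a by (intro rk_ge)
    hence "mis M A I" using a mis_iff by simp
    thus "\<exists>K. mis M A K \<and> I \<subseteq> K" by blast
  qed
next
  case (Suc n)
  show ?case
  proof (intro allI impI)
    fix I assume a: "indep M I" "I \<subseteq> A" "rk M A - card I = Suc n"
    obtain K where k: "indep M K" "K \<subseteq> A" "card K = rk M A" using rk_indep_witness by blast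
    have "card I < card K" using a k by linarith
    then obtain y where y: "y \<in> K - I" "indep M (insert y I)" using aug_indep a(1) k(1) by blast
    have "card (insert y I) = Suc (card I)" using y indep_fin[OF a(1)] by simp
    hence "rk M A - card (insert y I) = n" using a(3) by linarith
    moreover have "insert y I \<subseteq> A" using y k a by auto
    ultimately obtain K' where "mis M A K'" "insert y I \<subseteq> K'" using Suc.IH y(2) by blast
    thus "\<exists>K. mis M A K \<and> I \<subseteq> K" by blast
  qed
qed

lemma extend: "indep M I \<Longrightarrow> I \<subseteq> A \<Longrightarrow> \<exists>K. mis M A K \<and> I \<subseteq> K"
  using extend_aux by blast

lemma mis_exists: "\<exists>K. mis M A K"
  using extend[OF indep_empty] by blast

lemma rk_mono: "A \<subseteq> A' \<Longrightarrow> rk M A \<le> rk M A'"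
proof -
  assume s: "A \<subseteq> A'"
  obtain I where "indep M I" "I \<subseteq> A" "card I = rk M A" using rk_indep_witness by blast
  thus ?thesis using rk_ge[of I A'] s by auto
qed

lemma rk_le_card: "finite A \<Longrightarrow> rk M A \<le> card A"
proof -
  assume f: "finite A"
  obtain I where "indep M I" "I \<subseteq> A" "card I = rk M A" using rk_indep_witness by blast
  thus ?thesis using card_mono[OF f, of I] by linarith
qed

lemma rk_empty[simp]: "rk M {} = 0"
  using rk_le_card[of "{}"] by simp

lemma rk_basis: "B \<in> bases M \<Longrightarrow> rk M (ground M) = card B"
proof -
  assume b: "B \<in> bases M"
  obtain B' where b': "B' \<in> bases M" "card (B' \<inter> ground M) = rk M (ground M)" using rk_witness by blast
  have "B' \<inter> ground M = B'" using basis_sub[OF b'(1)] by auto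
  hence "rk M (ground M) = card B'" using b' by simp
  also have "\<dots> = card B" using b' b by (intro basis_card)
  finally show ?thesis .
qed

lemma indep_card_rk: "indep M I \<Longrightarrow> card I = rk M (ground M) \<Longrightarrow> I \<in> bases M"
  using bases_ne rk_basis indep_card_basis by (metis ex_in_conv)

lemma submod: "rk M (A \<union> B) + rk M (A \<inter> B) \<le> rk M A + rk M B"
proof -
  obtain I where i: "mis M (A \<inter> B) I" using mis_exists by blast
  have "I \<subseteq> A \<union> B" using mis_sub[OF i] by auto
  then obtain K where k: "mis M (A \<union> B) K" "I \<subseteq> K" using extend[OF mis_indep[OF i]] by blast
  have ki: "indep M K" using k mis_indep by blast
  have fK: "finite K" using indep_fin[OF ki] .
  have 1: "card (K \<inter> A) \<le> rk M A" using ki by (intro rk_ge) (auto intro: indep_mono)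
  have 2: "card (K \<inter> B) \<le> rk M B" using ki by (intro rk_ge) (auto intro: indep_mono)
  have 3: "card (K \<inter> A \<inter> B) \<ge> card I"
    using k(2) mis_sub[OF i] fK by (intro card_mono) auto
  have "card ((K \<inter> A) \<union> (K \<inter> B)) + card ((K \<inter> A) \<inter> (K \<inter> B)) = card (K \<inter> A) + card (K \<inter> B)"
    using card_Un_Int[of "K \<inter> A" "K \<inter> B"] fK by simp
  moreover have "(K \<inter> A) \<union> (K \<inter> B) = K" using mis_sub[OF k(1)] by auto
  moreover have "(K \<inter> A) \<inter> (K \<inter> B) = K \<inter> A \<inter> B" by auto
  ultimately have "card K + card (K \<inter> A \<inter> B) = card (K \<inter> A) + card (K \<inter> B)" by simp
  moreover have "card K = rk M (A \<union> B)" using mis_card[OF k(1)] .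
  moreover have "card I = rk M (A \<inter> B)" using mis_card[OF i] .
  ultimately show ?thesis using 1 2 3 by linarith
qed

lemma rk_union_le: "rk M (A \<union> B) \<le> rk M A + rk M B"
  using submod[of A B] by linarith

lemma rk_single_le: "rk M {e} \<le> 1"
  using rk_le_card[of "{e}"] by simp

end



lemma rk_char:
  assumes "matroid X" "indep X I" "I \<subseteq> A" "\<And>I'. indep X I' \<Longrightarrow> I' \<subseteq> A \<Longrightarrow> card I' \<le> card I"
  shows "rk X A = card I"
proof -
  obtain K where "indep X K" "K \<subseteq> A" "card K = rk X A" using rk_indep_witness[OF assms(1)] by blast
  moreover have "card K \<le> card I" using assms(4) \<open>indep X K\<close> \<open>K \<subseteq> A\<close> .
  moreover have "card I \<le> rk X A" using rk_ge[OF assms(1) assms(2) assms(3)] .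
  ultimately show ?thesis by linarith
qed

lemma rk_eqI:
  assumes "matroid X" "matroid Y" "\<And>I. I \<subseteq> A \<Longrightarrow> indep X I \<longleftrightarrow> indep Y I"
  shows "rk X A = rk Y A"
proof -
  obtain K where k: "indep X K" "K \<subseteq> A" "card K = rk X A" using rk_indep_witness[OF assms(1)] by blast
  have "rk Y A = card K"
  proof (rule rk_char[OF assms(2)])
    show "indep Y K" using k assms(3) by blast
    show "K \<subseteq> A" by fact
    show "card I' \<le> card K" if "indep Y I'" "I' \<subseteq> A" for I'
      using rk_ge[OF assms(1), of I' A] that assms(3) k(3) by auto
  qed
  thus ?thesis using k(3) by simp
qed

lemma matroid_eq: "ground X = ground Y \<Longrightarrow> bases X = bases Y \<Longrightarrow> X = Y"
  by (simp add: ground_def bases_def prod_eq_iff)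

context fixes M :: "'a matroid" assumes mat: "matroid M"
begin

section \<open>Restriction\<close>

lemma R_bases: "bases (restrict M S) = {I. indep M I \<and> I \<subseteq> S \<and> card I = rk M S}"
  using mis_iff[OF mat] by (auto simp: bases_restrict)

lemma R_matroid: assumes S: "S \<subseteq> ground M" shows "matroid (restrict M S)"
  unfolding matroid_def
proof (intro conjI ballI)
  show "finite (ground (restrict M S))" using S fin_E[OF mat] finite_subset by auto
  show "bases (restrict M S) \<noteq> {}" using mis_exists[OF mat] by (auto simp: bases_restrict)
  show "B \<subseteq> ground (restrict M S)" if "B \<in> bases (restrict M S)" for B using that R_bases by auto
  fix B1 B2 x assume b: "B1 \<in> bases (restrict M S)" "B2 \<in> bases (restrict M S)" "x \<in> B1 - B2"
  have i1: "indep M B1" "B1 \<subseteq> S" "card B1 = rk M S" using b(1) R_bases by auto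
  have i2: "indep M B2" "B2 \<subseteq> S" "card B2 = rk M S" using b(2) R_bases by auto
  have f1: "finite B1" using indep_fin[OF mat i1(1)] .
  have "card (B1 - {x}) = card B1 - 1" using b(3) f1 by simp
  moreover have "card B1 > 0" using b(3) f1 card_gt_0_iff by blast
  ultimately have "card (B1 - {x}) < card B2" using i1 i2 by linarith
  moreover have "indep M (B1 - {x})" using i1 indep_mono[OF mat] by blast
  ultimately obtain y where y: "y \<in> B2 - (B1 - {x})" "indep M (insert y (B1 - {x}))"
    using aug_indep[OF mat] i2(1) by blast
  have yx: "y \<noteq> x" using y b(3) by auto
  have "card (insert y (B1 - {x})) = card B1"
  proof -
    have "card B1 > 0" using b(3) f1 card_gt_0_iff by blast
    thus ?thesis using y yx b(3) f1 by (simp add: card_insert_if)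
  qed
  hence "insert y (B1 - {x}) \<in> bases (restrict M S)" using y i1 i2 R_bases by auto
  thus "\<exists>y\<in>B2 - B1. insert y (B1 - {x}) \<in> bases (restrict M S)" using y yx by blast
qed

lemma R_indep: "indep (restrict M S) I \<longleftrightarrow> indep M I \<and> I \<subseteq> S"
proof
  assume "indep (restrict M S) I"
  then obtain B where "B \<in> bases (restrict M S)" "I \<subseteq> B" unfolding indep_def by blast
  thus "indep M I \<and> I \<subseteq> S" using R_bases indep_mono[OF mat] by auto
next
  assume "indep M I \<and> I \<subseteq> S"
  then obtain K where "mis M S K" "I \<subseteq> K" using extend[OF mat] by blast
  thus "indep (restrict M S) I" unfolding indep_def bases_restrict by blast
qed

lemma R_rk: assumes "S \<subseteq> ground M" "A \<subseteq> S" shows "rk (restrict M S) A = rk M A"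
proof (rule rk_eqI[OF R_matroid[OF assms(1)] mat])
  fix I assume "I \<subseteq> A" thus "indep (restrict M S) I \<longleftrightarrow> indep M I" using R_indep assms(2) by auto
qed

lemma R_R: assumes "T \<subseteq> S" shows "restrict (restrict M S) T = restrict M T"
proof (rule matroid_eq)
  show "bases (restrict (restrict M S) T) = bases (restrict M T)"
  proof -
    have "mis (restrict M S) T I \<longleftrightarrow> mis M T I" for I
    proof
      assume "mis (restrict M S) T I"
      hence a: "I \<subseteq> T" "indep M I" "\<forall>J. I \<subset> J \<and> J \<subseteq> T \<longrightarrow> \<not> (indep M J \<and> J \<subseteq> S)"
        unfolding mis_def R_indep by auto
      show "mis M T I" unfolding mis_def using a assms by auto
    next
      assume "mis M T I"
      thus "mis (restrict M S) T I" unfolding mis_def R_indep using assms by auto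
    qed
    thus ?thesis unfolding bases_restrict by auto
  qed
qed simp

lemma R_self: "restrict M (ground M) = M"
proof (rule matroid_eq)
  show "bases (restrict M (ground M)) = bases M"
  proof safe
    fix B assume "B \<in> bases (restrict M (ground M))"
    thus "B \<in> bases M" using R_bases indep_card_rk[OF mat] by auto
  next
    fix B assume b: "B \<in> bases M"
    thus "B \<in> bases (restrict M (ground M))"
      using R_bases basis_indep[OF mat b] basis_sub[OF mat b] rk_basis[OF mat b] by auto
  qed
qed simp

section \<open>Contraction\<close>

lemma T7: assumes b: "B \<in> bases M" and m1: "mis M C (B \<inter> C)" and m2: "mis M C J"
  shows "(B - C) \<union> J \<in> bases M"
proof -
  obtain B'' where b'': "B'' \<in> bases M" "J \<subseteq> B''" "B'' \<subseteq> J \<union> B"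
    using aug_basis[OF mat mis_indep[OF mat m2] b] by blast
  have "B'' \<inter> C = J"
  proof (rule ccontr)
    assume "B'' \<inter> C \<noteq> J"
    hence "J \<subset> B'' \<inter> C" using b'' mis_sub[OF mat m2] by blast
    moreover have "indep M (B'' \<inter> C)" using b'' basis_indep[OF mat] indep_mono[OF mat] by blast
    ultimately show False using m2 unfolding mis_def by blast
  qed
  hence sub: "B'' \<subseteq> (B - C) \<union> J" using b'' by blast
  have fB: "finite B" using basis_fin[OF mat b] .
  have fJ: "finite J" using indep_fin[OF mat mis_indep[OF mat m2]] .
  have "card B = card (B \<inter> C) + card (B - C)" using fB card_Int_Diff by blast
  also have "card (B \<inter> C) = card J" using mis_card[OF mat m1] mis_card[OF mat m2] by simp
  finally have "card ((B - C) \<union> J) \<le> card B''"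
    using basis_card[OF mat b b''(1)] card_Un_le[of "B - C" J] by linarith
  thus ?thesis using card_seteq[OF _ sub] fB fJ b''(1) by auto
qed

lemma C_bases: assumes m: "mis M C J"
  shows "bases (contract M C) = {I. I \<inter> C = {} \<and> I \<union> J \<in> bases M}"
proof safe
  fix B assume "B \<in> bases (contract M C)"
  then obtain B0 where b0: "B = B0 - C" "B0 \<in> bases M" "card (B0 \<inter> C) = rk M C"
    unfolding bases_contract by blast
  have "mis M C (B0 \<inter> C)" using mis_iff[OF mat] b0 basis_indep[OF mat] indep_mono[OF mat] by blast
  thus "B \<union> J \<in> bases M" using T7[OF b0(2) _ m] b0(1) by simp
  fix x assume "x \<in> B" "x \<in> C" thus "x \<in> {}" using b0 by auto
next
  fix I assume a: "I \<inter> C = {}" "I \<union> J \<in> bases M"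
  have "(I \<union> J) \<inter> C = J" using a mis_sub[OF mat m] by auto
  moreover have "(I \<union> J) - C = I" using a mis_sub[OF mat m] by auto
  ultimately show "I \<in> bases (contract M C)" unfolding bases_contract
    using a(2) mis_card[OF mat m] by (metis (mono_tags, lifting) mem_Collect_eq)
qed

lemma C_indep: assumes m: "mis M C J"
  shows "indep (contract M C) I \<longleftrightarrow> I \<inter> C = {} \<and> indep M (I \<union> J)"
proof
  assume "indep (contract M C) I"
  then obtain B where "B \<in> bases (contract M C)" "I \<subseteq> B" unfolding indep_def by blast
  hence b: "B \<inter> C = {}" "B \<union> J \<in> bases M" "I \<subseteq> B" using C_bases[OF m] by auto
  have "I \<union> J \<subseteq> B \<union> J" using b by auto
  hence "indep M (I \<union> J)" using b(2) unfolding indep_def by blast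
  thus "I \<inter> C = {} \<and> indep M (I \<union> J)" using b by auto
next
  assume a: "I \<inter> C = {} \<and> indep M (I \<union> J)"
  then obtain B where b: "B \<in> bases M" "I \<union> J \<subseteq> B" unfolding indep_def by blast
  have "B \<inter> C = J"
  proof (rule ccontr)
    assume "B \<inter> C \<noteq> J"
    hence "J \<subset> B \<inter> C" using b mis_sub[OF mat m] by blast
    moreover have "indep M (B \<inter> C)" using b basis_indep[OF mat] indep_mono[OF mat] by blast
    ultimately show False using m unfolding mis_def by blast
  qed
  hence "(B - C) \<union> J = B" "(B - C) \<inter> C = {}" by auto
  hence "B - C \<in> bases (contract M C)" using C_bases[OF m] b by auto
  moreover have "I \<subseteq> B - C" using a b by auto
  ultimately show "indep (contract M C) I" unfolding indep_def by blast
qed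

lemma C_matroid: assumes C: "C \<subseteq> ground M" shows "matroid (contract M C)"
proof -
  obtain J where m: "mis M C J" using mis_exists[OF mat] by blast
  show ?thesis unfolding matroid_def
  proof (intro conjI ballI)
    show "finite (ground (contract M C))" using fin_E[OF mat] by simp
    obtain B where b: "B \<in> bases M" "J \<subseteq> B" using mis_indep[OF mat m] unfolding indep_def by blast
    have "B \<inter> C = J"
    proof (rule ccontr)
      assume "B \<inter> C \<noteq> J"
      hence "J \<subset> B \<inter> C" using b mis_sub[OF mat m] by blast
      moreover have "indep M (B \<inter> C)" using b basis_indep[OF mat] indep_mono[OF mat] by blast
      ultimately show False using m unfolding mis_def by blast
    qed
    hence "B - C \<in> bases (contract M C)" using C_bases[OF m] b by (auto simp: Un_Diff_Int)
    thus "bases (contract M C) \<noteq> {}" by blast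
    show "B \<subseteq> ground (contract M C)" if "B \<in> bases (contract M C)" for B
      using that C_bases[OF m] basis_sub[OF mat] by auto
    fix B1 B2 x assume b: "B1 \<in> bases (contract M C)" "B2 \<in> bases (contract M C)" "x \<in> B1 - B2"
    have i1: "B1 \<inter> C = {}" "B1 \<union> J \<in> bases M" using b(1) C_bases[OF m] by auto
    have i2: "B2 \<inter> C = {}" "B2 \<union> J \<in> bases M" using b(2) C_bases[OF m] by auto
    have xJ: "x \<notin> J" using i1 b(3) mis_sub[OF mat m] by auto
    have "x \<in> (B1 \<union> J) - (B2 \<union> J)" using b(3) xJ by auto
    then obtain y where y: "y \<in> (B2 \<union> J) - (B1 \<union> J)" "insert y ((B1 \<union> J) - {x}) \<in> bases M"
      using exch[OF mat i1(2) i2(2)] by blast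
    have "insert y ((B1 \<union> J) - {x}) = insert y (B1 - {x}) \<union> J" using xJ by auto
    moreover have "insert y (B1 - {x}) \<inter> C = {}" using y i1 i2 by auto
    ultimately have "insert y (B1 - {x}) \<in> bases (contract M C)" using y C_bases[OF m] by auto
    thus "\<exists>y\<in>B2 - B1. insert y (B1 - {x}) \<in> bases (contract M C)" using y by blast
  qed
qed

lemma C_rk: assumes C: "C \<subseteq> ground M" and A: "A \<inter> C = {}"
  shows "rk (contract M C) A = rk M (A \<union> C) - rk M C"
proof -
  obtain J where m: "mis M C J" using mis_exists[OF mat] by blast
  have Jsub: "J \<subseteq> C" using mis_sub[OF mat m] .
  have fJ: "finite J" using indep_fin[OF mat mis_indep[OF mat m]] .
  obtain K where k: "mis M (A \<union> C) K" "J \<subseteq> K"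
    using extend[OF mat mis_indep[OF mat m]] Jsub by blast
  have KC: "K \<inter> C = J"
  proof (rule ccontr)
    assume "K \<inter> C \<noteq> J"
    hence "J \<subset> K \<inter> C" using k Jsub by blast
    moreover have "indep M (K \<inter> C)" using mis_indep[OF mat k(1)] indep_mono[OF mat] by blast
    ultimately show False using m unfolding mis_def by blast
  qed
  have fK: "finite K" using indep_fin[OF mat mis_indep[OF mat k(1)]] .
  have KU: "(K - C) \<union> J = K" using KC by auto
  have cK: "card K = card (K - C) + card J" using fK KC card_Int_Diff[of K C] by auto
  have "rk (contract M C) A = card (K - C)"
  proof (rule rk_char[OF C_matroid[OF C]])
    show "indep (contract M C) (K - C)" using C_indep[OF m] KU mis_indep[OF mat k(1)] by auto
    show "K - C \<subseteq> A" using mis_sub[OF mat k(1)] by auto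
    fix I' assume i: "indep (contract M C) I'" "I' \<subseteq> A"
    hence "I' \<inter> C = {}" "indep M (I' \<union> J)" using C_indep[OF m] by auto
    moreover have "I' \<union> J \<subseteq> A \<union> C" using i Jsub by auto
    ultimately have "card (I' \<union> J) \<le> rk M (A \<union> C)" using rk_ge[OF mat] by blast
    moreover have "card (I' \<union> J) = card I' + card J"
      using \<open>I' \<inter> C = {}\<close> Jsub fJ indep_fin[OF mat \<open>indep M (I' \<union> J)\<close>] by (intro card_Un_disjoint) auto
    moreover have "card K = rk M (A \<union> C)" using mis_card[OF mat k(1)] .
    ultimately show "card I' \<le> card (K - C)" using cK by linarith
  qed
  also have "\<dots> = rk M (A \<union> C) - rk M C" using cK mis_card[OF mat k(1)] mis_card[OF mat m] by simp
  finally show ?thesis .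
qed

end

lemma C_empty: "matroid X \<Longrightarrow> contract X {} = X"
  by (rule matroid_eq) (auto simp: bases_contract rk_empty)




context fixes X :: "'a matroid" assumes mat: "matroid X"
begin

lemma sep_rank: assumes S: "S \<subseteq> ground X"
  shows "bases X = {B1 \<union> B2 | B1 B2. B1 \<in> bases (restrict X S) \<and> B2 \<in> bases (restrict X (ground X - S))}
     \<longleftrightarrow> rk X S + rk X (ground X - S) = rk X (ground X)"
proof
  assume e: "bases X = {B1 \<union> B2 | B1 B2. B1 \<in> bases (restrict X S) \<and> B2 \<in> bases (restrict X (ground X - S))}"
  obtain B where b: "B \<in> bases X" using bases_ne[OF mat] by blast
  then obtain B1 B2 where bb: "B = B1 \<union> B2" "B1 \<in> bases (restrict X S)" "B2 \<in> bases (restrict X (ground X - S))"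
    using e by blast
  have 1: "indep X B1" "B1 \<subseteq> S" "card B1 = rk X S" using bb(2) R_bases[OF mat] by auto
  have 2: "indep X B2" "B2 \<subseteq> ground X - S" "card B2 = rk X (ground X - S)" using bb(3) R_bases[OF mat] by auto
  have dj: "B1 \<inter> B2 = {}" using 1 2 by auto
  have "card B = card B1 + card B2" using bb(1) card_Un_disjoint[OF indep_fin[OF mat 1(1)] indep_fin[OF mat 2(1)] dj] by simp
  moreover have "card B = rk X (ground X)" using rk_basis[OF mat b] by simp
  ultimately show "rk X S + rk X (ground X - S) = rk X (ground X)" using 1 2 by simp
next
  assume r: "rk X S + rk X (ground X - S) = rk X (ground X)"
  show "bases X = {B1 \<union> B2 | B1 B2. B1 \<in> bases (restrict X S) \<and> B2 \<in> bases (restrict X (ground X - S))}"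
  proof safe
    fix B assume b: "B \<in> bases X"
    have fB: "finite B" using basis_fin[OF mat b] .
    have sB: "B \<subseteq> ground X" using basis_sub[OF mat b] .
    have c1: "card (B \<inter> S) \<le> rk X S" using rk_ge_basis[OF mat b] .
    have c2: "card (B \<inter> (ground X - S)) \<le> rk X (ground X - S)" using rk_ge_basis[OF mat b] .
    have "B \<inter> (ground X - S) = B - S" using sB by auto
    hence c3: "card B = card (B \<inter> S) + card (B \<inter> (ground X - S))" using fB card_Int_Diff by metis
    have "card B = rk X (ground X)" using rk_basis[OF mat b] by simp
    hence e1: "card (B \<inter> S) = rk X S" and e2: "card (B \<inter> (ground X - S)) = rk X (ground X - S)"
      using c1 c2 c3 r by linarith+
    have i: "indep X B" using basis_indep[OF mat b] .
    have "B \<inter> S \<in> bases (restrict X S)" using R_bases[OF mat] e1 indep_mono[OF mat i] by auto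
    moreover have "B \<inter> (ground X - S) \<in> bases (restrict X (ground X - S))"
      using R_bases[OF mat] e2 indep_mono[OF mat i] by auto
    moreover have "B = (B \<inter> S) \<union> (B \<inter> (ground X - S))" using sB by auto
    ultimately show "\<exists>B1 B2. B = B1 \<union> B2 \<and> B1 \<in> bases (restrict X S) \<and> B2 \<in> bases (restrict X (ground X - S))"
      by blast
  next
    fix B1 B2 assume b1: "B1 \<in> bases (restrict X S)" and b2: "B2 \<in> bases (restrict X (ground X - S))"
    have 1: "indep X B1" "B1 \<subseteq> S" "card B1 = rk X S" using b1 R_bases[OF mat] by auto
    have 2: "indep X B2" "B2 \<subseteq> ground X - S" "card B2 = rk X (ground X - S)" using b2 R_bases[OF mat] by auto
    obtain B where b: "B \<in> bases X" "B2 \<subseteq> B" using 2(1) unfolding indep_def by blast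
    have fB: "finite B" using basis_fin[OF mat b(1)] .
    have sB: "B \<subseteq> ground X" using basis_sub[OF mat b(1)] .
    have c2: "card (B \<inter> (ground X - S)) \<le> rk X (ground X - S)" using rk_ge_basis[OF mat b(1)] .
    have "B2 \<subseteq> B \<inter> (ground X - S)" using b 2 by auto
    hence BS: "B \<inter> (ground X - S) = B2" using card_seteq[of "B \<inter> (ground X - S)" B2] fB c2 2(3) by auto
    have "B \<inter> (ground X - S) = B - S" using sB by auto
    hence c3: "card B = card (B \<inter> S) + card (B \<inter> (ground X - S))" using fB card_Int_Diff by metis
    have "card B = rk X (ground X)" using rk_basis[OF mat b(1)] by simp
    moreover have "card (B \<inter> (ground X - S)) = rk X (ground X - S)" using BS 2(3) by simp
    ultimately have "card (B \<inter> S) = rk X S" using c3 r by linarith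
    hence m1: "mis X S (B \<inter> S)" using mis_iff[OF mat] indep_mono[OF mat basis_indep[OF mat b(1)]] by auto
    have m2: "mis X S B1" using mis_iff[OF mat] 1 by auto
    have "(B - S) \<union> B1 \<in> bases X" using T7[OF mat b(1) m1 m2] .
    moreover have "B - S = B2" using BS sB by auto
    ultimately show "B1 \<union> B2 \<in> bases X" by (simp add: Un_commute)
  qed
qed

lemma conn_iff: "connected X \<longleftrightarrow>
   (\<forall>Z. Z \<noteq> {} \<and> Z \<subset> ground X \<longrightarrow> rk X Z + rk X (ground X - Z) \<noteq> rk X (ground X))"
proof
  assume c: "connected X"
  show "\<forall>Z. Z \<noteq> {} \<and> Z \<subset> ground X \<longrightarrow> rk X Z + rk X (ground X - Z) \<noteq> rk X (ground X)"
  proof (intro allI impI notI)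
    fix Z assume z: "Z \<noteq> {} \<and> Z \<subset> ground X" and e: "rk X Z + rk X (ground X - Z) = rk X (ground X)"
    have "bases X = {B1 \<union> B2 | B1 B2. B1 \<in> bases (restrict X Z) \<and> B2 \<in> bases (restrict X (ground X - Z))}"
      using sep_rank[of Z] z e by auto
    thus False using c z unfolding connected_def by blast
  qed
next
  assume r: "\<forall>Z. Z \<noteq> {} \<and> Z \<subset> ground X \<longrightarrow> rk X Z + rk X (ground X - Z) \<noteq> rk X (ground X)"
  show "connected X" unfolding connected_def
  proof
    assume "\<exists>S. S \<noteq> {} \<and> S \<subset> ground X \<and> bases X = {B1 \<union> B2 | B1 B2. B1 \<in> bases (restrict X S) \<and> B2 \<in> bases (restrict X (ground X - S))}"
    then obtain S where s: "S \<noteq> {}" "S \<subset> ground X"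
      "bases X = {B1 \<union> B2 | B1 B2. B1 \<in> bases (restrict X S) \<and> B2 \<in> bases (restrict X (ground X - S))}"
      by blast
    have "rk X S + rk X (ground X - S) = rk X (ground X)" using sep_rank[of S] s by auto
    thus False using r s by blast
  qed
qed

lemma rk_compl: "Z \<subseteq> ground X \<Longrightarrow> rk X (ground X) \<le> rk X Z + rk X (ground X - Z)"
proof -
  assume "Z \<subseteq> ground X"
  hence "Z \<union> (ground X - Z) = ground X" by auto
  thus ?thesis using rk_union_le[OF mat, of Z "ground X - Z"] by simp
qed

lemma conn_gt: "connected X \<Longrightarrow> Z \<noteq> {} \<Longrightarrow> Z \<subset> ground X \<Longrightarrow> rk X Z + rk X (ground X - Z) \<ge> Suc (rk X (ground X))"
proof -
  assume a: "connected X" "Z \<noteq> {}" "Z \<subset> ground X"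
  hence "rk X Z + rk X (ground X - Z) \<noteq> rk X (ground X)" using conn_iff by blast
  moreover have "rk X (ground X) \<le> rk X Z + rk X (ground X - Z)" using rk_compl a(3) by auto
  ultimately show ?thesis by linarith
qed

end

lemma tutte:
  fixes X :: "'a matroid" assumes mat: "matroid X"
  assumes c: "connected X" and e: "e \<in> ground X" and two: "2 \<le> card (ground X)"
  shows "connected (restrict X (ground X - {e})) \<or> connected (contract X {e})"
proof (rule ccontr)
  let ?G = "ground X"
  let ?r = "rk X"
  assume "\<not> ?thesis"
  hence n1: "\<not> connected (restrict X (?G - {e}))" and n2: "\<not> connected (contract X {e})" by auto
  have sG: "?G - {e} \<subseteq> ?G" by auto
  have "\<exists>Z. Z \<noteq> {} \<and> Z \<subset> ?G - {e} \<and>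
    rk (restrict X (?G - {e})) Z + rk (restrict X (?G - {e})) (?G - {e} - Z) = rk (restrict X (?G - {e})) (?G - {e})"
    using n1 unfolding conn_iff[OF R_matroid[OF mat sG]] ground_restrict by blast
  then obtain X1 where x1: "X1 \<noteq> {}" "X1 \<subset> ?G - {e}"
    "rk (restrict X (?G - {e})) X1 + rk (restrict X (?G - {e})) (?G - {e} - X1) = rk (restrict X (?G - {e})) (?G - {e})"
    by blast
  have r1: "rk (restrict X (?G - {e})) X1 = ?r X1" by (rule R_rk[OF mat sG]) (use x1(2) in blast)
  have r2: "rk (restrict X (?G - {e})) (?G - {e} - X1) = ?r (?G - {e} - X1)" by (rule R_rk[OF mat sG]) blast
  have r3: "rk (restrict X (?G - {e})) (?G - {e}) = ?r (?G - {e})" by (rule R_rk[OF mat sG]) blast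
  have eq1: "?r X1 + ?r (?G - {e} - X1) = ?r (?G - {e})"
    using x1(3) unfolding r1 r2 r3 .
  have eG: "{e} \<subseteq> ?G" using e by auto
  have "\<exists>Z. Z \<noteq> {} \<and> Z \<subset> ?G - {e} \<and>
    rk (contract X {e}) Z + rk (contract X {e}) (?G - {e} - Z) = rk (contract X {e}) (?G - {e})"
    using n2 unfolding conn_iff[OF C_matroid[OF mat eG]] ground_contract by blast
  then obtain X2 where x2: "X2 \<noteq> {}" "X2 \<subset> ?G - {e}"
    "rk (contract X {e}) X2 + rk (contract X {e}) (?G - {e} - X2) = rk (contract X {e}) (?G - {e})"
    by blast
  have ce: "\<And>A. A \<subseteq> ?G - {e} \<Longrightarrow> rk (contract X {e}) A = ?r (A \<union> {e}) - ?r {e}"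
  proof -
    fix A assume "A \<subseteq> ?G - {e}"
    hence "A \<inter> {e} = {}" by auto
    thus "rk (contract X {e}) A = ?r (A \<union> {e}) - ?r {e}" by (rule C_rk[OF mat eG])
  qed
  have m: "\<And>A. ?r {e} \<le> ?r (A \<union> {e})" using rk_mono[OF mat] by auto
  have Ge: "?G - {e} \<union> {e} = ?G" using e by auto
  have c1: "rk (contract X {e}) X2 = ?r (X2 \<union> {e}) - ?r {e}" by (rule ce) (use x2(2) in blast)
  have c2: "rk (contract X {e}) (?G - {e} - X2) = ?r ((?G - {e} - X2) \<union> {e}) - ?r {e}" by (rule ce) blast
  have c3: "rk (contract X {e}) (?G - {e}) = ?r ?G - ?r {e}" using ce[of "?G - {e}"] Ge by simp
  have eq2': "?r (X2 \<union> {e}) - ?r {e} + (?r ((?G - {e} - X2) \<union> {e}) - ?r {e}) = ?r ?G - ?r {e}"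
    using x2(3) unfolding c1 c2 c3 .
  have eq2: "?r (X2 \<union> {e}) + ?r ((?G - {e} - X2) \<union> {e}) = ?r ?G + ?r {e}"
    using eq2' m[of X2] m[of "?G - {e} - X2"] m[of "?G - {e}"] unfolding Ge by linarith
  define Y1 where "Y1 = ?G - {e} - X1"
  define Y2 where "Y2 = ?G - {e} - X2"
  have re: "?r {e} \<le> 1" using rk_single_le[OF mat] .
  have rGe: "?r (?G - {e}) \<le> ?r ?G" using rk_mono[OF mat] by auto
  have key: "P \<inter> Q = {} \<or> (?G - {e} - P) \<inter> (?G - {e} - Q) = {}"
    if P: "P \<subseteq> ?G - {e}" and Q: "Q \<subseteq> ?G - {e}"
    and eqP: "?r P + ?r (?G - {e} - P) = ?r (?G - {e})"
    and eqQ: "?r (Q \<union> {e}) + ?r ((?G - {e} - Q) \<union> {e}) = ?r ?G + ?r {e}" for P Q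
  proof (rule ccontr)
    assume "\<not> ?thesis"
    hence ne1: "P \<inter> Q \<noteq> {}" and ne2: "(?G - {e} - P) \<inter> (?G - {e} - Q) \<noteq> {}" by auto
    let ?P' = "?G - {e} - P" and ?Q' = "?G - {e} - Q"
    have s1: "?r (P \<union> (Q \<union> {e})) + ?r (P \<inter> (Q \<union> {e})) \<le> ?r P + ?r (Q \<union> {e})" using submod[OF mat] .
    have s2: "?r (?P' \<union> (?Q' \<union> {e})) + ?r (?P' \<inter> (?Q' \<union> {e})) \<le> ?r ?P' + ?r (?Q' \<union> {e})" using submod[OF mat] .
    have i1: "P \<inter> (Q \<union> {e}) = P \<inter> Q" using P by blast
    have i2: "?P' \<inter> (?Q' \<union> {e}) = ?P' \<inter> ?Q'" by blast
    have g1: "?G - (P \<union> (Q \<union> {e})) = ?P' \<inter> ?Q'" by blast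
    have g2: "?G - (?P' \<union> (?Q' \<union> {e})) = P \<inter> Q" using P Q by blast
    have a1: "P \<union> (Q \<union> {e}) \<noteq> {}" by blast
    have a2: "P \<union> (Q \<union> {e}) \<subset> ?G" using P Q e ne2 by blast
    have b1: "?P' \<union> (?Q' \<union> {e}) \<noteq> {}" by blast
    have b2: "?P' \<union> (?Q' \<union> {e}) \<subset> ?G" using P Q e ne1 by blast
    have t1: "Suc (?r ?G) \<le> ?r (P \<union> (Q \<union> {e})) + ?r (?P' \<inter> ?Q')"
      using conn_gt[OF mat c a1 a2] unfolding g1 .
    have t2: "Suc (?r ?G) \<le> ?r (?P' \<union> (?Q' \<union> {e})) + ?r (P \<inter> Q)"
      using conn_gt[OF mat c b1 b2] unfolding g2 .
    show False using s1 s2 t1 t2 eqP eqQ re rGe unfolding i1 i2 by linarith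
  qed
  have X2c: "?G - {e} - Y2 = X2" using x2(2) unfolding Y2_def by blast
  have k1: "X1 \<inter> X2 = {} \<or> Y1 \<inter> Y2 = {}"
    using key[OF _ _ eq1 eq2] x1(2) x2(2) unfolding Y1_def Y2_def by blast
  have eq2s: "?r (Y2 \<union> {e}) + ?r ((?G - {e} - Y2) \<union> {e}) = ?r ?G + ?r {e}"
    using eq2 unfolding X2c unfolding Y2_def by linarith
  have k2: "X1 \<inter> Y2 = {} \<or> Y1 \<inter> X2 = {}"
  proof -
    have "Y2 \<subseteq> ?G - {e}" unfolding Y2_def by blast
    hence "X1 \<inter> Y2 = {} \<or> (?G - {e} - X1) \<inter> (?G - {e} - Y2) = {}"
      using key[OF _ _ eq1 eq2s] x1(2) by blast
    thus ?thesis unfolding X2c Y1_def by blast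
  qed
  have ny1: "Y1 \<noteq> {}" using x1(2) unfolding Y1_def by blast
  have ny2: "Y2 \<noteq> {}" using x2(2) unfolding Y2_def by blast
  have u1: "X1 \<union> Y1 = ?G - {e}" "X1 \<inter> Y1 = {}" using x1(2) unfolding Y1_def by blast+
  have u2: "X2 \<union> Y2 = ?G - {e}" "X2 \<inter> Y2 = {}" using x2(2) unfolding Y2_def by blast+
  obtain a where a: "a \<in> X1" using x1(1) by blast
  obtain b where b: "b \<in> Y1" using ny1 by blast
  show False
  proof (cases "a \<in> X2")
    case True
    hence "Y1 \<inter> Y2 = {}" using k1 a by blast
    hence "b \<in> X2" using b u1 u2 by blast
    hence "X1 \<inter> Y2 = {}" using k2 b by blast
    obtain z where "z \<in> Y2" using ny2 by blast
    thus False using \<open>X1 \<inter> Y2 = {}\<close> \<open>Y1 \<inter> Y2 = {}\<close> u1 u2 by blast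
  next
    case False
    hence "a \<in> Y2" using a u1 u2 by blast
    hence "Y1 \<inter> X2 = {}" using k2 a by blast
    hence "b \<in> Y2" using b u1 u2 by blast
    hence "X1 \<inter> X2 = {}" using k1 b by blast
    obtain z where "z \<in> X2" using x2(1) by blast
    thus False using \<open>X1 \<inter> X2 = {}\<close> \<open>Y1 \<inter> X2 = {}\<close> u1 u2 by blast
  qed
qed




definition lv :: "'a matroid \<Rightarrow> 'a set \<Rightarrow> nat set" where
  "lv X F = (\<lambda>B. card (B \<inter> F)) ` bases X"

lemma sep_exch:
  assumes mat: "matroid Y" and S: "S \<subseteq> ground Y"
    and ex: "\<And>B x y. B \<in> bases Y \<Longrightarrow> x \<in> B \<Longrightarrow> y \<notin> B \<Longrightarrow> y \<in> ground Y \<Longrightarrow>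
                 insert y (B - {x}) \<in> bases Y \<Longrightarrow> (x \<in> S \<longleftrightarrow> y \<in> S)"
  shows "rk Y S + rk Y (ground Y - S) = rk Y (ground Y)"
proof -
  have const: "\<forall>B. B \<in> bases Y \<longrightarrow> card (B - B') = n \<longrightarrow> card (B \<inter> S) = card (B' \<inter> S)"
    if b': "B' \<in> bases Y" for B' n
  proof (induction n)
    case 0
    show ?case
    proof (intro allI impI)
      fix B assume b: "B \<in> bases Y" "card (B - B') = 0"
      hence "B \<subseteq> B'" using basis_fin[OF mat] by auto
      moreover have "card B = card B'" using basis_card[OF mat b(1) b'] .
      moreover have "card B' \<le> card B" using \<open>card B = card B'\<close> by simp
      ultimately have "B = B'" using card_seteq[OF basis_fin[OF mat b']] by blast
      thus "card (B \<inter> S) = card (B' \<inter> S)" by simp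
    qed
  next
    case (Suc n)
    show ?case
    proof (intro allI impI)
      fix B assume b: "B \<in> bases Y" "card (B - B') = Suc n"
      then obtain x where x: "x \<in> B - B'" by (metis card.empty ex_in_conv nat.distinct(1))
      then obtain y where y: "y \<in> B' - B" "insert y (B - {x}) \<in> bases Y" using exch[OF mat b(1) b'] by blast
      have yG: "y \<in> ground Y" using y basis_sub[OF mat b'] by auto
      have xy: "x \<in> S \<longleftrightarrow> y \<in> S" using ex[OF b(1) _ _ yG y(2)] x y by auto
      have fB: "finite B" using basis_fin[OF mat b(1)] .
      have "insert y (B - {x}) - B' = (B - B') - {x}" using x y by auto
      hence "card (insert y (B - {x}) - B') = n" using b(2) x fB by simp
      hence "card (insert y (B - {x}) \<inter> S) = card (B' \<inter> S)" using Suc.IH y(2) by blast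
      moreover have "card (insert y (B - {x}) \<inter> S) = card (B \<inter> S)"
      proof (cases "x \<in> S")
        case True
        hence "insert y (B - {x}) \<inter> S = insert y ((B \<inter> S) - {x})" using xy by auto
        moreover have "y \<notin> (B \<inter> S) - {x}" using y by auto
        ultimately have "card (insert y (B - {x}) \<inter> S) = Suc (card ((B \<inter> S) - {x}))" using fB by simp
        moreover have "card ((B \<inter> S) - {x}) = card (B \<inter> S) - 1" using True x fB by simp
        moreover have "card (B \<inter> S) > 0" using True x fB card_gt_0_iff by blast
        ultimately show ?thesis by simp
      next
        case False
        hence "insert y (B - {x}) \<inter> S = B \<inter> S" using xy by auto
        thus ?thesis by simp
      qed
      ultimately show "card (B \<inter> S) = card (B' \<inter> S)" by simp
    qed
  qed
  obtain B0 where b0: "B0 \<in> bases Y" using bases_ne[OF mat] by blast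
  have allS: "card (B \<inter> S) = card (B0 \<inter> S)" if "B \<in> bases Y" for B using const[OF b0] that by blast
  have rS: "rk Y S = card (B0 \<inter> S)"
  proof -
    obtain B where "B \<in> bases Y" "card (B \<inter> S) = rk Y S" using rk_witness[OF mat] by blast
    thus ?thesis using allS by simp
  qed
  have rG: "rk Y (ground Y) = card B0" using rk_basis[OF mat b0] .
  have rGS: "rk Y (ground Y - S) = card B0 - card (B0 \<inter> S)"
  proof -
    obtain B where b: "B \<in> bases Y" "card (B \<inter> (ground Y - S)) = rk Y (ground Y - S)" using rk_witness[OF mat] by blast
    have fB: "finite B" using basis_fin[OF mat b(1)] .
    have "B \<inter> (ground Y - S) = B - S" using basis_sub[OF mat b(1)] by auto
    hence "card (B \<inter> (ground Y - S)) = card B - card (B \<inter> S)" using fB by (simp add: card_Diff_subset_Int Diff_Int2)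
    thus ?thesis using b allS[OF b(1)] basis_card[OF mat b(1) b0] by simp
  qed
  have "card (B0 \<inter> S) \<le> card B0" using basis_fin[OF mat b0] by (intro card_mono) auto
  thus ?thesis using rS rG rGS by simp
qed

context fixes X :: "'a matroid" assumes mat: "matroid X"
begin

lemma lv_interval_aux:
  assumes b': "B' \<in> bases X"
  shows "\<forall>B v. B \<in> bases X \<longrightarrow> card (B - B') = n \<longrightarrow> min (card (B \<inter> F)) (card (B' \<inter> F)) \<le> v
     \<longrightarrow> v \<le> max (card (B \<inter> F)) (card (B' \<inter> F)) \<longrightarrow> v \<in> lv X F"
proof (induction n)
  case 0
  show ?case
  proof (intro allI impI)
    fix B v assume b: "B \<in> bases X" "card (B - B') = 0"
      "min (card (B \<inter> F)) (card (B' \<inter> F)) \<le> v" "v \<le> max (card (B \<inter> F)) (card (B' \<inter> F))"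
    hence "B \<subseteq> B'" using basis_fin[OF mat] by auto
    moreover have "card B = card B'" using basis_card[OF mat b(1) b'] .
    moreover have "card B' \<le> card B" using \<open>card B = card B'\<close> by simp
    ultimately have "B = B'" using card_seteq[OF basis_fin[OF mat b']] by blast
    hence "v = card (B \<inter> F)" using b by simp
    thus "v \<in> lv X F" using b(1) unfolding lv_def by blast
  qed
next
  case (Suc n)
  show ?case
  proof (intro allI impI)
    fix B v assume b: "B \<in> bases X" "card (B - B') = Suc n"
      "min (card (B \<inter> F)) (card (B' \<inter> F)) \<le> v" "v \<le> max (card (B \<inter> F)) (card (B' \<inter> F))"
    show "v \<in> lv X F"
    proof (cases "v = card (B \<inter> F)")
      case True thus ?thesis using b(1) unfolding lv_def by blast
    next
      case False
      obtain x where x: "x \<in> B - B'" using b(2) by (metis card.empty ex_in_conv nat.distinct(1))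
      then obtain y where y: "y \<in> B' - B" "insert y (B - {x}) \<in> bases X" using exch[OF mat b(1) b'] by blast
      let ?B1 = "insert y (B - {x})"
      have fB: "finite B" using basis_fin[OF mat b(1)] .
      have "?B1 - B' = (B - B') - {x}" using x y by auto
      hence n: "card (?B1 - B') = n" using b(2) x fB by simp
      have "?B1 \<inter> F \<subseteq> insert y (B \<inter> F)" by auto
      hence c1: "card (?B1 \<inter> F) \<le> Suc (card (B \<inter> F))"
        using card_mono[of "insert y (B \<inter> F)" "?B1 \<inter> F"] card_insert_le[of "B \<inter> F" y] fB
        by (metis finite_Int finite_insert le_SucI card_insert_if le_refl)
      have "B \<inter> F \<subseteq> insert x (?B1 \<inter> F)" by auto
      hence c2: "card (B \<inter> F) \<le> Suc (card (?B1 \<inter> F))"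
        using card_mono[of "insert x (?B1 \<inter> F)" "B \<inter> F"] fB
        by (metis finite_Int finite_insert finite_Diff le_SucI card_insert_if le_refl)
      have "min (card (?B1 \<inter> F)) (card (B' \<inter> F)) \<le> v \<and> v \<le> max (card (?B1 \<inter> F)) (card (B' \<inter> F))"
        using b(3,4) c1 c2 False by (simp add: min_def max_def split: if_splits)
      thus ?thesis using Suc.IH y(2) n by blast
    qed
  qed
qed

lemma lv_eq: assumes F: "F \<subseteq> ground X"
  shows "lv X F = {rk X (ground X) - rk X (ground X - F) .. rk X F}"
proof
  show "lv X F \<subseteq> {rk X (ground X) - rk X (ground X - F) .. rk X F}"
  proof
    fix v assume "v \<in> lv X F"
    then obtain B where b: "B \<in> bases X" "v = card (B \<inter> F)" unfolding lv_def by blast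
    have fB: "finite B" using basis_fin[OF mat b(1)] .
    have "B \<inter> (ground X - F) = B - F" using basis_sub[OF mat b(1)] by auto
    hence "card B = card (B \<inter> F) + card (B \<inter> (ground X - F))" using fB card_Int_Diff by metis
    moreover have "card (B \<inter> (ground X - F)) \<le> rk X (ground X - F)" using rk_ge_basis[OF mat b(1)] .
    moreover have "card B = rk X (ground X)" using rk_basis[OF mat b(1)] by simp
    moreover have "card (B \<inter> F) \<le> rk X F" using rk_ge_basis[OF mat b(1)] .
    ultimately show "v \<in> {rk X (ground X) - rk X (ground X - F) .. rk X F}" using b by simp
  qed
next
  obtain Bh where bh: "Bh \<in> bases X" "card (Bh \<inter> F) = rk X F" using rk_witness[OF mat] by blast
  obtain W where w: "indep X W" "W \<subseteq> ground X - F" "card W = rk X (ground X - F)"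
    using rk_indep_witness[OF mat] by blast
  obtain Bl where bl: "Bl \<in> bases X" "W \<subseteq> Bl" using w(1) unfolding indep_def by blast
  have fB: "finite Bl" using basis_fin[OF mat bl(1)] .
  have "card W \<le> card (Bl \<inter> (ground X - F))" using w bl fB by (intro card_mono) auto
  moreover have "card (Bl \<inter> (ground X - F)) \<le> rk X (ground X - F)" using rk_ge_basis[OF mat bl(1)] .
  ultimately have e: "card (Bl \<inter> (ground X - F)) = rk X (ground X - F)" using w by simp
  have "Bl \<inter> (ground X - F) = Bl - F" using basis_sub[OF mat bl(1)] by auto
  hence "card Bl = card (Bl \<inter> F) + card (Bl \<inter> (ground X - F))" using fB card_Int_Diff by metis
  moreover have "card Bl = rk X (ground X)" using rk_basis[OF mat bl(1)] by simp
  ultimately have lo: "card (Bl \<inter> F) = rk X (ground X) - rk X (ground X - F)" using e by simp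
  show "{rk X (ground X) - rk X (ground X - F) .. rk X F} \<subseteq> lv X F"
  proof
    fix v assume "v \<in> {rk X (ground X) - rk X (ground X - F) .. rk X F}"
    hence "min (card (Bl \<inter> F)) (card (Bh \<inter> F)) \<le> v" "v \<le> max (card (Bl \<inter> F)) (card (Bh \<inter> F))"
      using lo bh by auto
    thus "v \<in> lv X F" using lv_interval_aux[OF bh(1)] bl(1) by blast
  qed
qed

lemma card_lv: assumes F: "F \<subseteq> ground X"
  shows "card (lv X F) = rk X F + rk X (ground X - F) - rk X (ground X) + 1"
proof -
  have "rk X (ground X) \<le> rk X F + rk X (ground X - F)" using rk_compl[OF mat F] .
  moreover have "rk X (ground X - F) \<le> rk X (ground X)" using rk_mono[OF mat] by auto
  ultimately show ?thesis using lv_eq[OF F] by simp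
qed

lemma lv_verts: assumes F: "F \<subseteq> ground X"
  shows "card ((\<lambda>x. \<Sum>e\<in>F. x e) ` verts X) = card (lv X F)"
proof -
  have fF: "finite F" using F fin_E[OF mat] finite_subset by blast
  have "(\<lambda>x. \<Sum>e\<in>F. x e) ` verts X = (\<lambda>B. real (card (B \<inter> F))) ` bases X"
  proof -
    have "(\<Sum>e\<in>F. (indicator B e :: real)) = real (card (B \<inter> F))" for B
      using sum_mult_indicator[OF fF, of "\<lambda>x. 1::real" B] by (simp add: Int_commute)
    thus ?thesis unfolding verts_def image_image by simp
  qed
  also have "\<dots> = real ` lv X F" unfolding lv_def image_image by simp
  finally show ?thesis by (simp add: card_image)
qed

lemma aff_ind: assumes "B \<subseteq> ground X"
  shows "aff X a c (indicator B) = (\<Sum>e\<in>B. a e) + c"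
proof -
  have "(\<Sum>e\<in>ground X. a e * indicator B e) = (\<Sum>e\<in>ground X \<inter> B. a e)"
    using fin_E[OF mat] by simp
  moreover have "ground X \<inter> B = B" using assms by auto
  ultimately show ?thesis unfolding aff_def by simp
qed

lemma levelness_ge: assumes "facet_defining X a c" shows "card (aff X a c ` verts X) \<le> levelness X"
proof -
  let ?P = "\<lambda>k. \<forall>a c. facet_defining X a c \<longrightarrow> card (aff X a c ` verts X) \<le> k"
  have fv: "finite (verts X)" unfolding verts_def using fin_bases[OF mat] by simp
  have "?P (card (verts X))" using card_image_le[OF fv] by blast
  hence "?P (LEAST k. ?P k)" by (rule LeastI)
  thus ?thesis using assms unfolding levelness_def by blast
qed

end



lemma sum_swap:
  fixes a :: "'a \<Rightarrow> real"
  assumes "finite B" "x \<in> B" "y \<notin> B"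
  shows "(\<Sum>e\<in>insert y (B - {x}). a e) = (\<Sum>e\<in>B. a e) - a x + a y"
proof -
  have "(\<Sum>e\<in>insert y (B - {x}). a e) = a y + (\<Sum>e\<in>B - {x}. a e)" using assms by (simp add: sum.insert)
  moreover have "(\<Sum>e\<in>B. a e) = a x + (\<Sum>e\<in>B - {x}. a e)" using assms by (simp add: sum.remove)
  ultimately show ?thesis by simp
qed

lemma flacet_facet:
  assumes mat: "matroid X" and fl: "flacet X F" and b0: "B0 \<in> bases X" and lo: "card (B0 \<inter> F) < rk X F"
  shows "facet_defining X (\<lambda>e. - indicator F e) (real (rk X F))"
proof -
  let ?G = "ground X"
  let ?a = "\<lambda>e. - (indicator F e :: real)"
  let ?c = "real (rk X F)"
  have Fsub: "F \<subseteq> ?G" and Fne: "F \<noteq> {}" and Fps: "F \<subset> ?G"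
    and cR: "connected (restrict X F)" and cC: "connected (contract X F)"
    using fl unfolding flacet_def flat_def by auto
  have fE: "finite ?G" using fin_E[OF mat] .
  have affB: "aff X ?a ?c (indicator B) = real (rk X F) - real (card (B \<inter> F))" if b: "B \<in> bases X" for B
  proof -
    have fB: "finite B" using basis_fin[OF mat b] .
    have "(\<Sum>e\<in>B. ?a e) = - (\<Sum>e\<in>B. (1::real) * indicator F e)" by (simp add: sum_negf)
    also have "\<dots> = - real (card (B \<inter> F))" using sum_mult_indicator[OF fB, of "\<lambda>x. 1::real" F] by simp
    finally show ?thesis using aff_ind[OF mat basis_sub[OF mat b]] by simp
  qed
  have vert: "\<exists>B\<in>bases X. v = indicator B" if "v \<in> verts X" for v using that unfolding verts_def by blast
  have indv: "indicator B \<in> verts X" if "B \<in> bases X" for B using that unfolding verts_def by blast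
  have nonneg: "\<forall>v\<in>verts X. aff X ?a ?c v \<ge> 0"
  proof
    fix v assume "v \<in> verts X"
    then obtain B where b: "B \<in> bases X" "v = indicator B" using vert by blast
    have "card (B \<inter> F) \<le> rk X F" using rk_ge_basis[OF mat b(1)] .
    thus "aff X ?a ?c v \<ge> 0" using affB[OF b(1)] b(2) by simp
  qed
  have isf: "is_face X (face_of_aff X ?a ?c)" unfolding is_face_def using nonneg by blast
  have nv: "face_of_aff X ?a ?c \<noteq> verts X"
  proof
    assume "face_of_aff X ?a ?c = verts X"
    hence "aff X ?a ?c (indicator B0) = 0" using indv[OF b0] unfolding face_of_aff_def by blast
    thus False using affB[OF b0] lo by simp
  qed
  have maxi: "G' = face_of_aff X ?a ?c" if g: "is_face X G'" "G' \<noteq> verts X" "face_of_aff X ?a ?c \<subseteq> G'" for G'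
  proof -
    obtain a' c' where ac: "\<forall>v\<in>verts X. aff X a' c' v \<ge> 0" "G' = face_of_aff X a' c'"
      using g(1) unfolding is_face_def by blast
    define s where "s B = (\<Sum>e\<in>B. a' e) + c'" for B
    have sB: "aff X a' c' (indicator B) = s B" if "B \<in> bases X" for B
      using aff_ind[OF mat basis_sub[OF mat that]] unfolding s_def by simp
    have top0: "s B = 0" if b: "B \<in> bases X" "card (B \<inter> F) = rk X F" for B
    proof -
      have "indicator B \<in> face_of_aff X ?a ?c" unfolding face_of_aff_def using indv[OF b(1)] affB[OF b(1)] b(2) by simp
      hence "indicator B \<in> G'" using g(3) by blast
      thus ?thesis using ac(2) sB[OF b(1)] unfolding face_of_aff_def by simp
    qed
    have swap: "a' x = a' y" if u: "U \<in> bases X" "card (U \<inter> F) = rk X F" "x \<in> U" "y \<notin> U"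
      "insert y (U - {x}) \<in> bases X" "card (insert y (U - {x}) \<inter> F) = rk X F" for U x y
    proof -
      have "s U = 0" "s (insert y (U - {x})) = 0" using top0 u by auto
      moreover have "(\<Sum>e\<in>insert y (U - {x}). a' e) = (\<Sum>e\<in>U. a' e) - a' x + a' y"
        using sum_swap[OF basis_fin[OF mat u(1)] u(3) u(4)] .
      ultimately show ?thesis unfolding s_def by simp
    qed
    obtain x0 where x0: "x0 \<in> F" using Fne by blast
    have alpha: "\<forall>y\<in>F. a' y = a' x0"
    proof (rule ccontr)
      assume nA: "\<not> ?thesis"
      let ?S = "{y \<in> F. a' y = a' x0}"
      have mR: "matroid (restrict X F)" using R_matroid[OF mat Fsub] .
      obtain B2 where b2: "B2 \<in> bases (contract X F)" using bases_ne[OF C_matroid[OF mat Fsub]] by blast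
      have "rk (restrict X F) ?S + rk (restrict X F) (ground (restrict X F) - ?S) = rk (restrict X F) (ground (restrict X F))"
      proof (rule sep_exch[OF mR])
        show "?S \<subseteq> ground (restrict X F)" by auto
        fix B1 x y assume e: "B1 \<in> bases (restrict X F)" "x \<in> B1" "y \<notin> B1" "y \<in> ground (restrict X F)"
          "insert y (B1 - {x}) \<in> bases (restrict X F)"
        have m1: "mis X F B1" using e(1) bases_restrict by blast
        have m2: "mis X F (insert y (B1 - {x}))" using e(5) bases_restrict by blast
        have u1: "B2 \<inter> F = {}" "B2 \<union> B1 \<in> bases X" using b2 C_bases[OF mat m1] by auto
        have u2: "B2 \<union> insert y (B1 - {x}) \<in> bases X" using b2 C_bases[OF mat m2] by auto
        have s1: "B1 \<subseteq> F" using mis_sub[OF mat m1] .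
        have s2: "insert y (B1 - {x}) \<subseteq> F" using mis_sub[OF mat m2] .
        have eqU: "B2 \<union> insert y (B1 - {x}) = insert y ((B2 \<union> B1) - {x})" using u1(1) s1 e(2) by auto
        have "(B2 \<union> B1) \<inter> F = B1" using u1(1) s1 by auto
        hence c1: "card ((B2 \<union> B1) \<inter> F) = rk X F" using mis_card[OF mat m1] by simp
        have "(B2 \<union> insert y (B1 - {x})) \<inter> F = insert y (B1 - {x})" using u1(1) s2 by auto
        hence c2: "card ((B2 \<union> insert y (B1 - {x})) \<inter> F) = rk X F" using mis_card[OF mat m2] by simp
        have yU: "y \<notin> B2 \<union> B1" using e(3) e(4) u1(1) by auto
        have "a' x = a' y" using swap[of "B2 \<union> B1" x y] u1(2) c1 e(2) yU u2 c2 unfolding eqU by auto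
        thus "x \<in> ?S \<longleftrightarrow> y \<in> ?S" using e(4) s1 e(2) by auto
      qed
      moreover have "?S \<noteq> {}" using x0 by auto
      moreover have "?S \<subset> ground (restrict X F)"
      proof -
        obtain z where z: "z \<in> ground (restrict X F)" "a' z \<noteq> a' x0" using nA by auto
        hence "z \<notin> ?S" by blast
        moreover have "?S \<subseteq> ground (restrict X F)" by auto
        ultimately show ?thesis using z(1) by blast
      qed
      ultimately show False using conn_gt[OF mR cR, of ?S] by linarith
    qed
    obtain y0 where y0: "y0 \<in> ?G - F" using Fps by blast
    have beta: "\<forall>y\<in>?G - F. a' y = a' y0"
    proof (rule ccontr)
      assume nB: "\<not> ?thesis"
      let ?S = "{y \<in> ?G - F. a' y = a' y0}"
      have mC: "matroid (contract X F)" using C_matroid[OF mat Fsub] .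
      obtain J where mJ: "mis X F J" using mis_exists[OF mat] by blast
      have sJ: "J \<subseteq> F" using mis_sub[OF mat mJ] .
      have "rk (contract X F) ?S + rk (contract X F) (ground (contract X F) - ?S) = rk (contract X F) (ground (contract X F))"
      proof (rule sep_exch[OF mC])
        show "?S \<subseteq> ground (contract X F)" by auto
        fix B2 x y assume e: "B2 \<in> bases (contract X F)" "x \<in> B2" "y \<notin> B2" "y \<in> ground (contract X F)"
          "insert y (B2 - {x}) \<in> bases (contract X F)"
        have u1: "B2 \<inter> F = {}" "B2 \<union> J \<in> bases X" using e(1) C_bases[OF mat mJ] by auto
        have u2: "insert y (B2 - {x}) \<inter> F = {}" "insert y (B2 - {x}) \<union> J \<in> bases X" using e(5) C_bases[OF mat mJ] by auto
        have xJ: "x \<notin> J" using u1(1) e(2) sJ by auto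
        have eqU: "insert y (B2 - {x}) \<union> J = insert y ((B2 \<union> J) - {x})" using xJ by auto
        have "(B2 \<union> J) \<inter> F = J" using u1(1) sJ by auto
        hence c1: "card ((B2 \<union> J) \<inter> F) = rk X F" using mis_card[OF mat mJ] by simp
        have "(insert y (B2 - {x}) \<union> J) \<inter> F = J" using u2(1) sJ by auto
        hence c2: "card ((insert y (B2 - {x}) \<union> J) \<inter> F) = rk X F" using mis_card[OF mat mJ] by simp
        have yU: "y \<notin> B2 \<union> J" using e(3) e(4) sJ by auto
        have "a' x = a' y" using swap[of "B2 \<union> J" x y] u1(2) c1 e(2) yU u2(2) c2 unfolding eqU by auto
        moreover have "x \<in> ?G - F"
        proof -
          have "B2 \<union> J \<subseteq> ?G" using basis_sub[OF mat u1(2)] .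
          thus ?thesis using u1(1) e(2) by blast
        qed
        ultimately show "x \<in> ?S \<longleftrightarrow> y \<in> ?S" using e(4) by auto
      qed
      moreover have "?S \<noteq> {}" using y0 by auto
      moreover have "?S \<subset> ground (contract X F)"
      proof -
        obtain z where z: "z \<in> ground (contract X F)" "a' z \<noteq> a' y0" using nB by auto
        hence "z \<notin> ?S" by blast
        moreover have "?S \<subseteq> ground (contract X F)" by auto
        ultimately show ?thesis using z(1) by blast
      qed
      ultimately show False using conn_gt[OF mC cC, of ?S] by linarith
    qed
    define \<alpha> where "\<alpha> = a' x0"
    define \<beta> where "\<beta> = a' y0"
    define r where "r = rk X ?G"
    have sumB: "s B = \<alpha> * real (card (B \<inter> F)) + \<beta> * (real r - real (card (B \<inter> F))) + c'"
      if b: "B \<in> bases X" for B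
    proof -
      have fB: "finite B" using basis_fin[OF mat b] .
      have "(\<Sum>e\<in>B. a' e) = (\<Sum>e\<in>B \<inter> F. a' e) + (\<Sum>e\<in>B - F. a' e)" using fB by (rule sum.Int_Diff)
      moreover have "(\<Sum>e\<in>B \<inter> F. a' e) = (\<Sum>e\<in>B \<inter> F. \<alpha>)" using alpha unfolding \<alpha>_def by (intro sum.cong) auto
      moreover have "(\<Sum>e\<in>B - F. a' e) = (\<Sum>e\<in>B - F. \<beta>)"
        using beta basis_sub[OF mat b] unfolding \<beta>_def by (intro sum.cong) auto
      moreover have "card (B - F) = card B - card (B \<inter> F)" using fB by (simp add: card_Diff_subset_Int)
      moreover have "card B = r" using rk_basis[OF mat b] unfolding r_def by simp
      moreover have "card (B \<inter> F) \<le> card B" using fB by (intro card_mono) auto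
      ultimately show ?thesis unfolding s_def by (simp add: of_nat_diff)
    qed
    obtain Bt where bt: "Bt \<in> bases X" "card (Bt \<inter> F) = rk X F" using rk_witness[OF mat] by blast
    have ct: "\<alpha> * real (rk X F) + \<beta> * (real r - real (rk X F)) + c' = 0"
      using top0[OF bt] sumB[OF bt(1)] bt(2) by simp
    have sform: "s B = (\<alpha> - \<beta>) * (real (card (B \<inter> F)) - real (rk X F))" if "B \<in> bases X" for B
      using sumB[OF that] ct by (simp add: algebra_simps)
    have "s B0 \<ge> 0" using ac(1) indv[OF b0] sB[OF b0] by auto
    hence ab: "\<alpha> - \<beta> \<le> 0" using sform[OF b0] lo
      by (smt (verit) mult_pos_neg of_nat_less_iff)
    show ?thesis
    proof (cases "\<alpha> = \<beta>")
      case True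
      have "face_of_aff X a' c' = verts X"
      proof
        show "face_of_aff X a' c' \<subseteq> verts X" unfolding face_of_aff_def by blast
        show "verts X \<subseteq> face_of_aff X a' c'"
        proof
          fix v assume "v \<in> verts X"
          then obtain B where b: "B \<in> bases X" "v = indicator B" using vert by blast
          thus "v \<in> face_of_aff X a' c'" unfolding face_of_aff_def using sB[OF b(1)] sform[OF b(1)] True indv[OF b(1)] by simp
        qed
      qed
      thus ?thesis using g(2) ac(2) by simp
    next
      case False
      hence ab': "\<alpha> - \<beta> \<noteq> 0" by simp
      show ?thesis
      proof
        show "face_of_aff X ?a ?c \<subseteq> G'" by (rule g(3))
        show "G' \<subseteq> face_of_aff X ?a ?c"
        proof
          fix v assume "v \<in> G'"
          hence v: "v \<in> verts X" "aff X a' c' v = 0" using ac(2) unfolding face_of_aff_def by auto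
          then obtain B where b: "B \<in> bases X" "v = indicator B" using vert by blast
          have "(\<alpha> - \<beta>) * (real (card (B \<inter> F)) - real (rk X F)) = 0" using v b sB[OF b(1)] sform[OF b(1)] by simp
          hence "card (B \<inter> F) = rk X F" using ab' by simp
          thus "v \<in> face_of_aff X ?a ?c" unfolding face_of_aff_def using v(1) b affB[OF b(1)] by simp
        qed
      qed
    qed
  qed
  have "is_facet X (face_of_aff X ?a ?c)" unfolding is_facet_def using isf nv maxi by blast
  thus ?thesis unfolding facet_defining_def using nonneg by blast
qed

lemma flacet_levelness:
  assumes mat: "matroid X" and fl: "flacet X F" and two: "2 \<le> card (lv X F)"
  shows "card (lv X F) \<le> levelness X"
proof -
  have Fsub: "F \<subseteq> ground X" using fl unfolding flacet_def flat_def by auto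
  have "\<exists>v\<in>lv X F. v \<noteq> rk X F"
  proof (rule ccontr)
    assume "\<not> ?thesis"
    hence "lv X F \<subseteq> {rk X F}" by auto
    hence "card (lv X F) \<le> 1" using card_mono[of "{rk X F}"] by fastforce
    thus False using two by simp
  qed
  then obtain B0 where b0: "B0 \<in> bases X" "card (B0 \<inter> F) \<noteq> rk X F" unfolding lv_def by blast
  have lo: "card (B0 \<inter> F) < rk X F" using b0 rk_ge_basis[OF mat b0(1)] by (simp add: order_le_neq_trans)
  have fd: "facet_defining X (\<lambda>e. - indicator F e) (real (rk X F))" using flacet_facet[OF mat fl b0(1) lo] .
  have "aff X (\<lambda>e. - indicator F e) (real (rk X F)) ` verts X = (\<lambda>v. real (rk X F) - real v) ` lv X F"
  proof -
    have "aff X (\<lambda>e. - indicator F e) (real (rk X F)) (indicator B) = real (rk X F) - real (card (B \<inter> F))"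
      if b: "B \<in> bases X" for B
    proof -
      have fB: "finite B" using basis_fin[OF mat b] .
      have "(\<Sum>e\<in>B. - (indicator F e :: real)) = - (\<Sum>e\<in>B. (1::real) * indicator F e)" by (simp add: sum_negf)
      also have "\<dots> = - real (card (B \<inter> F))" using sum_mult_indicator[OF fB, of "\<lambda>x. 1::real" F] by simp
      finally show ?thesis using aff_ind[OF mat basis_sub[OF mat b]] by simp
    qed
    thus ?thesis unfolding verts_def lv_def image_image by (intro image_cong) auto
  qed
  moreover have "inj_on (\<lambda>v. real (rk X F) - real v) (lv X F)" by (rule inj_onI) simp
  ultimately have "card (aff X (\<lambda>e. - indicator F e) (real (rk X F)) ` verts X) = card (lv X F)"
    by (simp add: card_image)
  thus ?thesis using levelness_ge[OF mat fd] by simp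
qed




context fixes M :: "'a matroid" assumes mat: "matroid M"
begin

lemma E1:
  assumes F: "F \<subseteq> ground M" and e: "e \<in> F" and ie: "indep M {e}"
  shows "restrict (contract M {e}) (F - {e}) = contract (restrict M F) {e}"
proof (rule matroid_eq)
  show "ground (restrict (contract M {e}) (F - {e})) = ground (contract (restrict M F) {e})" by simp
  have eE: "{e} \<subseteq> ground M" using F e by auto
  have mN: "matroid (contract M {e})" using C_matroid[OF mat eE] .
  have r1: "rk M {e} = 1" using rk_ge[OF mat ie, of "{e}"] rk_single_le[OF mat, of e] by simp
  have me: "mis M {e} {e}" using mis_iff[OF mat] ie r1 by simp
  have mR: "matroid (restrict M F)" using R_matroid[OF mat F] .
  have me2: "mis (restrict M F) {e} {e}"
    using mis_iff[OF mR] R_indep[OF mat] ie e R_rk[OF mat F, of "{e}"] r1 by simp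
  have rkN: "rk (contract M {e}) (F - {e}) = rk M F - 1"
  proof -
    have "(F - {e}) \<inter> {e} = {}" by auto
    hence "rk (contract M {e}) (F - {e}) = rk M ((F - {e}) \<union> {e}) - rk M {e}" by (rule C_rk[OF mat eE])
    moreover have "(F - {e}) \<union> {e} = F" using e by auto
    ultimately show ?thesis using r1 by simp
  qed
  have rF: "rk M F \<ge> 1" using rk_ge[OF mat ie, of F] e by simp
  show "bases (restrict (contract M {e}) (F - {e})) = bases (contract (restrict M F) {e})"
  proof -
    have "I \<in> bases (restrict (contract M {e}) (F - {e})) \<longleftrightarrow> I \<in> bases (contract (restrict M F) {e})" for I
    proof -
      have "I \<in> bases (restrict (contract M {e}) (F - {e})) \<longleftrightarrow>
            I \<inter> {e} = {} \<and> indep M (I \<union> {e}) \<and> I \<subseteq> F - {e} \<and> card I = rk M F - 1"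
        using R_bases[OF mN] C_indep[OF mat me] rkN by auto
      moreover have "I \<in> bases (contract (restrict M F) {e}) \<longleftrightarrow>
            I \<inter> {e} = {} \<and> indep M (I \<union> {e}) \<and> I \<union> {e} \<subseteq> F \<and> card (I \<union> {e}) = rk M F"
        using C_bases[OF mR me2] R_bases[OF mat] by auto
      moreover have "card (I \<union> {e}) = card I + 1" if a: "indep M (I \<union> {e})" "I \<inter> {e} = {}"
      proof -
        have "finite (I \<union> {e})" using indep_fin[OF mat a(1)] .
        hence "finite I" by simp
        thus ?thesis using a(2) by simp
      qed
      ultimately show ?thesis using rF e by auto
    qed
    thus ?thesis by blast
  qed
qed

lemma E2:
  assumes F: "F \<subseteq> ground M" and e: "e \<in> F" and ie: "indep M {e}"
  shows "contract (contract M {e}) (F - {e}) = contract M F"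
proof (rule matroid_eq)
  show "ground (contract (contract M {e}) (F - {e})) = ground (contract M F)" using e by auto
  have eE: "{e} \<subseteq> ground M" using F e by auto
  have mN: "matroid (contract M {e})" using C_matroid[OF mat eE] .
  have r1: "rk M {e} = 1" using rk_ge[OF mat ie, of "{e}"] rk_single_le[OF mat, of e] by simp
  have me: "mis M {e} {e}" using mis_iff[OF mat] ie r1 by simp
  obtain J where mJ: "mis M F J" "{e} \<subseteq> J" using extend[OF mat ie] e by blast
  have eJ: "e \<in> J" using mJ by auto
  have fJ: "finite J" using indep_fin[OF mat mis_indep[OF mat mJ(1)]] .
  have rkN: "rk (contract M {e}) (F - {e}) = rk M F - 1"
  proof -
    have "(F - {e}) \<inter> {e} = {}" by auto
    hence "rk (contract M {e}) (F - {e}) = rk M ((F - {e}) \<union> {e}) - rk M {e}" by (rule C_rk[OF mat eE])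
    moreover have "(F - {e}) \<union> {e} = F" using e by auto
    ultimately show ?thesis using r1 by simp
  qed
  have JJ: "(J - {e}) \<union> {e} = J" using eJ by auto
  have mJ': "mis (contract M {e}) (F - {e}) (J - {e})"
  proof -
    have "indep (contract M {e}) (J - {e})" using C_indep[OF mat me] JJ mis_indep[OF mat mJ(1)] by auto
    moreover have "J - {e} \<subseteq> F - {e}" using mis_sub[OF mat mJ(1)] by auto
    moreover have "card (J - {e}) = rk M F - 1" using mis_card[OF mat mJ(1)] eJ fJ by simp
    ultimately show ?thesis using mis_iff[OF mN] rkN by simp
  qed
  show "bases (contract (contract M {e}) (F - {e})) = bases (contract M F)"
  proof -
    have "I \<in> bases (contract (contract M {e}) (F - {e})) \<longleftrightarrow> I \<in> bases (contract M F)" for I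
    proof -
      have "I \<in> bases (contract (contract M {e}) (F - {e})) \<longleftrightarrow>
        I \<inter> (F - {e}) = {} \<and> (I \<union> (J - {e})) \<inter> {e} = {} \<and> (I \<union> (J - {e})) \<union> {e} \<in> bases M"
        using C_bases[OF mN mJ'] C_bases[OF mat me] by auto
      moreover have "I \<in> bases (contract M F) \<longleftrightarrow> I \<inter> F = {} \<and> I \<union> J \<in> bases M"
        using C_bases[OF mat mJ(1)] by auto
      moreover have "(I \<union> (J - {e})) \<union> {e} = I \<union> J" using eJ by auto
      ultimately show ?thesis using e by auto
    qed
    thus ?thesis by blast
  qed
qed

lemma E3:
  assumes F: "F \<subseteq> ground M" and e: "e \<in> F" and rF: "rk M (F - {e}) = rk M F"
    and rE: "rk M (ground M - {e}) = rk M (ground M)"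
  shows "contract (restrict M (ground M - {e})) (F - {e}) = contract M F"
proof (rule matroid_eq)
  show "ground (contract (restrict M (ground M - {e})) (F - {e})) = ground (contract M F)" using e by auto
  have sE: "ground M - {e} \<subseteq> ground M" by auto
  have mN: "matroid (restrict M (ground M - {e}))" using R_matroid[OF mat sE] .
  obtain J where mJ: "mis M (F - {e}) J" using mis_exists[OF mat] by blast
  have sJ: "J \<subseteq> F - {e}" using mis_sub[OF mat mJ] .
  have mJF: "mis M F J" using mis_iff[OF mat] mJ rF sJ by auto
  have mJN: "mis (restrict M (ground M - {e})) (F - {e}) J"
  proof -
    have "F - {e} \<subseteq> ground M - {e}" using F by auto
    hence "rk (restrict M (ground M - {e})) (F - {e}) = rk M (F - {e})" by (rule R_rk[OF mat sE])
    thus ?thesis using mis_iff[OF mN] R_indep[OF mat] mis_iff[OF mat] mJ F by auto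
  qed
  have bN: "B \<in> bases (restrict M (ground M - {e})) \<longleftrightarrow> B \<in> bases M \<and> e \<notin> B" for B
  proof -
    have "B \<in> bases (restrict M (ground M - {e})) \<longleftrightarrow> indep M B \<and> B \<subseteq> ground M - {e} \<and> card B = rk M (ground M)"
      using R_bases[OF mat] rE by auto
    moreover have "indep M B \<and> card B = rk M (ground M) \<longleftrightarrow> B \<in> bases M"
      using indep_card_rk[OF mat] basis_indep[OF mat] rk_basis[OF mat] by metis
    ultimately show ?thesis using basis_sub[OF mat] by blast
  qed
  show "bases (contract (restrict M (ground M - {e})) (F - {e})) = bases (contract M F)"
  proof -
    have "I \<in> bases (contract (restrict M (ground M - {e})) (F - {e})) \<longleftrightarrow> I \<in> bases (contract M F)" for I
    proof -
      have "I \<in> bases (contract (restrict M (ground M - {e})) (F - {e})) \<longleftrightarrow>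
        I \<inter> (F - {e}) = {} \<and> I \<union> J \<in> bases M \<and> e \<notin> I \<union> J"
        using C_bases[OF mN mJN] bN by auto
      moreover have "I \<in> bases (contract M F) \<longleftrightarrow> I \<inter> F = {} \<and> I \<union> J \<in> bases M"
        using C_bases[OF mat mJF] by auto
      ultimately show ?thesis using sJ e by auto
    qed
    thus ?thesis by blast
  qed
qed

end


lemma empty_minor_level:
  "1 \<le> levelness (({}, {{}}) :: 'a matroid)"
proof -
  let ?N = "({}, {{}}) :: 'a matroid"
  have gN: "ground ?N = {}" and bN: "bases ?N = {{}}" by (simp_all add: ground_def bases_def)
  have mN: "matroid ?N" unfolding matroid_def gN bN by auto
  have vN: "verts ?N = {indicator {}}" unfolding verts_def bN by simp
  have aN: "aff ?N a c v = c" for a c v unfolding aff_def gN by simp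
  have fd: "facet_defining ?N (\<lambda>_. 0) 1"
  proof -
    have fa: "face_of_aff ?N (\<lambda>_. 0) 1 = {}" unfolding face_of_aff_def aN by simp
    have "is_facet ?N {}"
      unfolding is_facet_def
    proof (intro conjI allI impI)
      show "is_face ?N {}" unfolding is_face_def using fa aN by (intro exI[of _ "\<lambda>_. 0"] exI[of _ 1]) simp
      show "{} \<noteq> verts ?N" using vN by simp
      fix G assume g: "is_face ?N G \<and> G \<noteq> verts ?N \<and> {} \<subseteq> G"
      then obtain a c where "G = face_of_aff ?N a c" unfolding is_face_def by blast
      hence "G \<subseteq> verts ?N" unfolding face_of_aff_def by blast
      hence "G \<subseteq> {indicator {}}" using vN by simp
      hence "G = {} \<or> G = {indicator {}}" by (simp add: subset_singleton_iff)
      thus "G = {}" using g vN by auto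
    qed
    thus ?thesis unfolding facet_defining_def fa using aN by simp
  qed
  have "card (aff ?N (\<lambda>_. 0) 1 ` verts ?N) \<le> levelness ?N" by (rule levelness_ge[OF mN fd])
  moreover have "aff ?N (\<lambda>_. 0) 1 ` verts ?N = {1}" using vN aN by simp
  ultimately show ?thesis by simp
qed

theorem proposition6p6:
  fixes M :: "'a matroid" and F :: "'a set" and k :: nat
  assumes "matroid M"
    and "minimally_level M k"
    and "level_flacet M F k"
  shows "rk M F = k - 1"
proof -
  note mat = assms(1)
  let ?E = "ground M"
  let ?r = "rk M"
  have fl: "flacet M F" and kk: "card ((\<lambda>x. \<Sum>e\<in>F. x e) ` verts M) = k"
    using assms(3) unfolding level_flacet_def by auto
  have lev: "levelness M = k" and minl: "\<And>N. matroid N \<Longrightarrow> proper_minor N M \<Longrightarrow> levelness N < k"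
    using assms(2) unfolding minimally_level_def by auto
  have Fsub: "F \<subseteq> ?E" and Fne: "F \<noteq> {}" and Fps: "F \<subset> ?E" and flat: "flat M F"
    and cR: "connected (restrict M F)" and cC: "connected (contract M F)"
    using fl unfolding flacet_def flat_def by auto
  have fE: "finite ?E" using fin_E[OF mat] .
  have fF: "finite F" using Fsub fE finite_subset by blast
  have k_eq: "k = ?r F + ?r (?E - F) - ?r ?E + 1"
    using kk lv_verts[OF mat Fsub] card_lv[OF mat Fsub] by simp
  have c1: "?r ?E \<le> ?r F + ?r (?E - F)" using rk_compl[OF mat Fsub] .
  have c2: "?r (?E - F) \<le> ?r ?E" using rk_mono[OF mat] by auto
  \<comment> \<open>k at least 2, via the empty minor\<close>
  have k2: "2 \<le> k"
  proof -
    let ?N = "({}, {{}}) :: 'a matroid"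
    have mN: "matroid ?N" unfolding matroid_def by (simp add: ground_def bases_def)
    have mR0: "matroid (restrict M {})" using R_matroid[OF mat] by simp
    have "restrict M {} = ?N"
    proof (rule matroid_eq)
      show "ground (restrict M {}) = ground ?N" by (simp add: ground_def restrict_def)
      have bN: "bases ?N = {{}}" by (simp add: bases_def)
      show "bases (restrict M {}) = bases ?N"
        unfolding bN using R_bases[OF mat, of "{}"] indep_empty[OF mat] rk_empty[OF mat] by auto
    qed
    hence "contract (restrict M {}) {} = ?N" using C_empty[OF mR0] by simp
    moreover have "{} \<noteq> ?E" using Fne Fsub by blast
    ultimately have "proper_minor ?N M" unfolding proper_minor_def by (intro exI[of _ "{}"]) auto
    hence "levelness ?N < k" using minl[OF mN] by simp
    thus ?thesis using empty_minor_level by (metis Suc_1 Suc_leI le_less_trans)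
  qed
  show ?thesis
  proof (rule ccontr)
    assume ne: "?r F \<noteq> k - 1"
    have lt: "?r (?E - F) < ?r ?E" using ne k_eq c1 c2 by linarith
    have big: "?r ?E + 1 \<le> ?r F + ?r (?E - F)" using k_eq k2 c1 by linarith
    have cF: "2 \<le> card F"
    proof (rule ccontr)
      assume "\<not> 2 \<le> card F"
      hence "card F \<le> 1" by simp
      hence "?r F \<le> 1" using rk_le_card[OF mat fF] by linarith
      thus False using big lt by linarith
    qed
    \<comment> \<open>a basis meeting F minimally, and an element e of F in it\<close>
    obtain W where w: "indep M W" "W \<subseteq> ?E - F" "card W = ?r (?E - F)"
      using rk_indep_witness[OF mat] by blast
    obtain B0 where b0': "B0 \<in> bases M" "W \<subseteq> B0" using w(1) unfolding indep_def by blast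
    have fB0: "finite B0" using basis_fin[OF mat b0'(1)] .
    have "card W \<le> card (B0 \<inter> (?E - F))" using w b0' fB0 by (intro card_mono) auto
    moreover have "card (B0 \<inter> (?E - F)) \<le> ?r (?E - F)" using rk_ge_basis[OF mat b0'(1)] .
    moreover have "B0 \<inter> (?E - F) = B0 - F" using basis_sub[OF mat b0'(1)] by auto
    ultimately have cBF: "card (B0 - F) = ?r (?E - F)" using w(3) by simp
    have "card (B0 - F) = card B0 - card (B0 \<inter> F)" using fB0 by (simp add: card_Diff_subset_Int)
    moreover have "card (B0 \<inter> F) \<le> card B0" using fB0 by (intro card_mono) auto
    moreover have "card B0 = ?r ?E" using rk_basis[OF mat b0'(1)] by simp
    ultimately have b0: "B0 \<in> bases M" "card (B0 \<inter> F) = ?r ?E - ?r (?E - F)"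
      using cBF b0'(1) by auto
    have "B0 \<inter> F \<noteq> {}" using b0(2) lt by auto
    then obtain e where e: "e \<in> B0" "e \<in> F" by blast
    have eE: "e \<in> ?E" using e Fsub by auto
    have ie: "indep M {e}" using e b0(1) basis_indep[OF mat] indep_mono[OF mat] by blast
    have re: "?r {e} = 1" using rk_ge[OF mat ie, of "{e}"] rk_single_le[OF mat, of e] by simp
    have mR: "matroid (restrict M F)" using R_matroid[OF mat Fsub] .
    have RR: "restrict (restrict M F) (F - {e}) = restrict M (F - {e})" by (rule R_R[OF mat]) auto
    have tut: "connected (restrict M (F - {e})) \<or> connected (contract (restrict M F) {e})"
    proof -
      have "e \<in> ground (restrict M F)" "2 \<le> card (ground (restrict M F))" using e cF by auto
      from tutte[OF mR cR this] show ?thesis unfolding ground_restrict RR .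
    qed
    obtain x where x: "x \<in> ?E - F" using Fps by blast
    show False
    proof (cases "connected (restrict M (F - {e}))")
      case True
      let ?S = "?E - {e}"
      let ?N = "restrict M ?S"
      let ?F' = "F - {e}"
      have sS: "?S \<subseteq> ?E" by auto
      have mN: "matroid ?N" using R_matroid[OF mat sS] .
      have rF': "?r ?F' = ?r F"
      proof -
        have ne1: "{e} \<noteq> {}" by simp
        have "F \<noteq> {e}" using cF by auto
        hence ps1: "{e} \<subset> ground (restrict M F)" using e by auto
        have "Suc (rk (restrict M F) F) \<le> rk (restrict M F) {e} + rk (restrict M F) (F - {e})"
          using conn_gt[OF mR cR ne1 ps1] by simp
        moreover have "rk (restrict M F) F = ?r F" by (rule R_rk[OF mat Fsub]) simp
        moreover have "rk (restrict M F) {e} = ?r {e}" by (rule R_rk[OF mat Fsub]) (use e in simp)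
        moreover have "rk (restrict M F) (F - {e}) = ?r (F - {e})" by (rule R_rk[OF mat Fsub]) simp
        moreover have "?r ?F' \<le> ?r F" using rk_mono[OF mat] by auto
        ultimately show ?thesis using re by linarith
      qed
      have rS: "?r ?S = ?r ?E"
      proof -
        have "?r (F \<union> ?S) + ?r (F \<inter> ?S) \<le> ?r F + ?r ?S" by (rule submod[OF mat])
        moreover have "F \<union> ?S = ?E" using Fsub e by auto
        moreover have "F \<inter> ?S = ?F'" using Fsub by auto
        moreover have "?r ?S \<le> ?r ?E" using rk_mono[OF mat] by auto
        ultimately show ?thesis using rF' by simp
      qed
      have rkN: "rk ?N A = ?r A" if "A \<subseteq> ?S" for A by (rule R_rk[OF mat sS that])
      have gN: "ground ?N = ?S" by simp
      have F'sub: "?F' \<subseteq> ?S" using Fsub by auto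
      have GF: "?S - ?F' = ?E - F" using e by auto
      have EFsub: "?E - F \<subseteq> ?S" using e by auto
      have cardN: "card (lv ?N ?F') = k"
        using card_lv[OF mN, of ?F'] F'sub unfolding gN GF
        using rkN[OF F'sub] rkN[OF EFsub] rkN[of ?S] rF' rS k_eq e by auto
      have flN: "flacet ?N ?F'"
        unfolding flacet_def
      proof (intro conjI)
        show "flat ?N ?F'" unfolding flat_def gN
        proof (intro conjI ballI)
          show "?F' \<subseteq> ?S" by (rule F'sub)
          fix y assume y: "y \<in> ?S - ?F'"
          hence yF: "y \<notin> F" "y \<in> ?E" by auto
          have "?r (insert y F) > ?r F" using flat yF unfolding flat_def by auto
          moreover have "?r (insert y ?F' \<union> F) + ?r (insert y ?F' \<inter> F) \<le> ?r (insert y ?F') + ?r F"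
            by (rule submod[OF mat])
          moreover have "insert y ?F' \<union> F = insert y F" by auto
          moreover have "insert y ?F' \<inter> F = ?F'" using yF by auto
          ultimately have "?r (insert y ?F') > ?r ?F'" using rF' by simp
          moreover have "insert y ?F' \<subseteq> ?S" using y F'sub by auto
          ultimately show "rk ?N ?F' < rk ?N (insert y ?F')" using rkN F'sub by simp
        qed
        show "?F' \<noteq> {}"
        proof
          assume "?F' = {}"
          hence "F \<subseteq> {e}" by auto
          hence "card F \<le> 1" using card_mono[of "{e}" F] by simp
          thus False using cF by simp
        qed
        show "?F' \<subset> ground ?N" using F'sub x e unfolding gN by blast
        show "connected (restrict ?N ?F')" using True R_R[OF mat F'sub] by simp
        show "connected (contract ?N ?F')" using cC E3[OF mat Fsub e(2) rF' rS] by simp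
      qed
      have "k \<le> levelness ?N" using flacet_levelness[OF mN flN] cardN k2 by simp
      moreover have "proper_minor ?N M"
        unfolding proper_minor_def using C_empty[OF mN] eE by (intro exI[of _ ?S] exI[of _ "{}"]) auto
      ultimately show False using minl[OF mN] by simp
    next
      case False
      hence cCe: "connected (contract (restrict M F) {e})" using tut by simp
      let ?N = "contract M {e}"
      let ?F' = "F - {e}"
      have sE: "{e} \<subseteq> ?E" using eE by auto
      have mN: "matroid ?N" using C_matroid[OF mat sE] .
      have rkN: "rk ?N A = ?r (A \<union> {e}) - 1" if "A \<inter> {e} = {}" for A
        using C_rk[OF mat sE that] re by simp
      have gN: "ground ?N = ?E - {e}" by simp
      have GF: "(?E - {e}) - ?F' = ?E - F" using e by auto
      have rF1: "?r F \<ge> 1" using rk_ge[OF mat ie, of F] e by simp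
      have rE1: "?r ?E \<ge> 1" using rk_ge[OF mat ie, of ?E] eE by simp
      have rEFe: "?r ((?E - F) \<union> {e}) = ?r (?E - F) + 1"
      proof -
        have le: "?r ((?E - F) \<union> {e}) \<le> ?r (?E - F) + 1" using rk_union_le[OF mat, of "?E - F" "{e}"] re by simp
        have fB: "finite B0" using basis_fin[OF mat b0(1)] .
        have "(B0 - F) \<union> {e} \<subseteq> B0" using e by auto
        hence "indep M ((B0 - F) \<union> {e})" by (rule indep_mono[OF mat basis_indep[OF mat b0(1)]])
        moreover have "(B0 - F) \<union> {e} \<subseteq> (?E - F) \<union> {e}" using basis_sub[OF mat b0(1)] by auto
        ultimately have "card ((B0 - F) \<union> {e}) \<le> ?r ((?E - F) \<union> {e})" by (rule rk_ge[OF mat])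
        moreover have "card ((B0 - F) \<union> {e}) = card (B0 - F) + 1" using fB e by simp
        moreover have "card (B0 - F) = card B0 - card (B0 \<inter> F)" using fB by (simp add: card_Diff_subset_Int)
        moreover have "card B0 = ?r ?E" using rk_basis[OF mat b0(1)] by simp
        ultimately show ?thesis using le b0(2) c2 by linarith
      qed
      have k1: "rk ?N ?F' = ?r F - 1"
      proof -
        have "?F' \<union> {e} = F" using e by auto
        thus ?thesis using rkN[of ?F'] by simp
      qed
      have k3: "rk ?N (?E - F) = ?r (?E - F)" using rkN[of "?E - F"] rEFe e by simp
      have k4: "rk ?N (?E - {e}) = ?r ?E - 1"
      proof -
        have "(?E - {e}) \<union> {e} = ?E" using eE by auto
        thus ?thesis using rkN[of "?E - {e}"] by simp
      qed
      have F'sub: "?F' \<subseteq> ?E - {e}" using Fsub by auto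
      have cardN: "card (lv ?N ?F') = k"
        using card_lv[OF mN, of ?F'] F'sub unfolding gN GF k1 k3 k4 using k_eq rF1 rE1 by simp
      have flN: "flacet ?N ?F'"
        unfolding flacet_def
      proof (intro conjI)
        show "flat ?N ?F'" unfolding flat_def gN
        proof (intro conjI ballI)
          show "?F' \<subseteq> ?E - {e}" by (rule F'sub)
          fix y assume y: "y \<in> ?E - {e} - ?F'"
          hence yF: "y \<notin> F" "y \<in> ?E" using e by auto
          have "?r (insert y F) > ?r F" using flat yF unfolding flat_def by auto
          moreover have "insert y ?F' \<union> {e} = insert y F" using e by auto
          moreover have "insert y ?F' \<inter> {e} = {}" using yF e by auto
          ultimately have "rk ?N (insert y ?F') = ?r (insert y F) - 1" using rkN by simp
          thus "rk ?N ?F' < rk ?N (insert y ?F')" using k1 rF1 \<open>?r (insert y F) > ?r F\<close> by linarith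
        qed
        show "?F' \<noteq> {}"
        proof
          assume "?F' = {}"
          hence "F \<subseteq> {e}" by auto
          hence "card F \<le> 1" using card_mono[of "{e}" F] by simp
          thus False using cF by simp
        qed
        show "?F' \<subset> ground ?N" using F'sub x e unfolding gN by blast
        show "connected (restrict ?N ?F')" using cCe E1[OF mat Fsub e(2) ie] by simp
        show "connected (contract ?N ?F')" using cC E2[OF mat Fsub e(2) ie] by simp
      qed
      have "k \<le> levelness ?N" using flacet_levelness[OF mN flN] cardN k2 by simp
      moreover have "proper_minor ?N M"
        unfolding proper_minor_def using R_self[OF mat] eE by (intro exI[of _ ?E] exI[of _ "{e}"]) auto
      ultimately show False using minl[OF mN] by simp
    qed
  qed
qed


end
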